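(* Let $d\geqslant3$ be an integer and $\rho_0\in(0,1)$. Set $n_j=(d-1)d^j$ and $r_j=\rho_0^{1/n_j}$ for $j=0,1,2,\dots$, and define $\mu$ by $\mu(z)=(\bar z/|z|)^{n_j-2}$ for $r_j<|z|<r_{j+1}$, $j\geqslant0$, and $\mu(z)=0$ for $|z|<r_0$ and for $|z|>1$. Then: (i) $\mu=(z^d)^*\mu+\mu\cdot\chi_{A(r_0,r_1)}$; (ii) $\mathcal C\mu(z^d)=dz^{d-1}\mathcal C\mu(z)-\frac{2d}{d-1}[\rho_0^{1/d}-\rho_0]\,z$ for $|z|>1$; (iii) $\mathcal C\mu(z)=-\frac{2d}{d-1}[\rho_0^{1/d}-\rho_0]\,v(z)$ for $|z|>1$; (iv) $\mathcal{S}\mu(z)=-\frac{2d}{d-1}[\rho_0^{1/d}-\rho_0]\,v'(z)$ for $|z|>1$; where $v(z)=-\frac{z}{d}\sum_{n=0}^\infty\frac{z^{-(d-1)d^n}}{d^n}$ for $|z|>1$.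
   Context: $A(r,\rho)=\{r<|z|<\rho\}$. For $f(z)=z^d$, $(f^*\mu)(z)=\mu(f(z))\,\overline{f'(z)}/f'(z)$. $\mathcal C\mu(z)=\frac{1}{\pi}\int_{\mathbb{C}}\frac{\mu(\zeta)}{z-\zeta}\,dm(\zeta)$ is the Cauchy transform and $\mathcal{S}\mu(z)=-\frac{1}{\pi}\,\mathrm{p.v.}\int_{\mathbb{C}}\frac{\mu(w)}{(z-w)^2}\,dm(w)$ the Beurling transform. *)

theory Defs
  imports "HOL-Analysis.Analysis"
begin

definition annulus :: "real \<Rightarrow> real \<Rightarrow> complex set" where
  "annulus r \<rho> = {z. r < cmod z \<and> cmod z < \<rho>}"

text \<open>Pullback of a Beltrami coefficient under f(z) = z^d:
  (f^* mu)(z) = mu(f z) * conj(f' z) / f' z.\<close>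
definition pullback_pow :: "nat \<Rightarrow> (complex \<Rightarrow> complex) \<Rightarrow> complex \<Rightarrow> complex" where
  "pullback_pow d \<mu> z =
     \<mu> (z ^ d) * cnj (of_nat d * z ^ (d - 1)) / (of_nat d * z ^ (d - 1))"

definition cauchy_transform :: "(complex \<Rightarrow> complex) \<Rightarrow> complex \<Rightarrow> complex" where
  "cauchy_transform \<mu> z = of_real (1 / pi) * (\<integral>w. \<mu> w / (z - w) \<partial>lborel)"

definition beurling_transform :: "(complex \<Rightarrow> complex) \<Rightarrow> complex \<Rightarrow> complex" where
  "beurling_transform \<mu> z =
     of_real (- 1 / pi) *
       Lim (at_right 0)
         (\<lambda>\<epsilon>::real. (LINT w:{w. \<epsilon> < cmod (z - w)}|lborel. \<mu> w / (z - w)^2))"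

definition nseq :: "nat \<Rightarrow> nat \<Rightarrow> nat" where
  "nseq d j = (d - 1) * d ^ j"

definition rseq :: "nat \<Rightarrow> real \<Rightarrow> nat \<Rightarrow> real" where
  "rseq d \<rho>0 j = \<rho>0 powr (1 / real (nseq d j))"

text \<open>mu(z) = (conj z/|z|)^(n_j - 2) on r_j < |z| < r_{j+1}, and 0 elsewhere
  (the circles |z| = r_j and |z| = 1 are null sets; we put mu = 0 there).\<close>
definition mu :: "nat \<Rightarrow> real \<Rightarrow> complex \<Rightarrow> complex" where
  "mu d \<rho>0 z =
     (if \<exists>j. rseq d \<rho>0 j < cmod z \<and> cmod z < rseq d \<rho>0 (Suc j)
      then (cnj z / of_real (cmod z)) ^
             (nseq d (THE j. rseq d \<rho>0 j < cmod z \<and> cmod z < rseq d \<rho>0 (Suc j)) - 2)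
      else 0)"

definition vfun :: "nat \<Rightarrow> complex \<Rightarrow> complex" where
  "vfun d z = - (z / of_nat d) *
      (\<Sum>n. inverse (z ^ ((d - 1) * d ^ n)) / of_nat (d ^ n))"

end

theory Submission
  imports Defs "HOL-Analysis.Analysis"
begin


definition cpx :: "real \<times> real \<Rightarrow> complex" where "cpx p = Complex (fst p) (snd p)"

lemma cpx_measurable[measurable]: "cpx \<in> borel_measurable borel"
  unfolding cpx_def by (intro borel_measurable_continuous_onI continuous_intros) 

lemma lborel_cpx: "distr lborel borel cpx = (lborel :: complex measure)"
proof (rule lborel_eqI[symmetric])
  fix l u :: complex
  assume le: "\<And>b. b \<in> Basis \<Longrightarrow> l \<bullet> b \<le> u \<bullet> b"
  have "Re l \<le> Re u" "Im l \<le> Im u" using le[of 1] le[of \<i>] by (auto simp: Basis_complex_def)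
  have eq: "cpx -` box l u = {Re l<..<Re u} \<times> {Im l<..<Im u}"
    by (auto simp: cpx_def box_def Basis_complex_def)
  have "emeasure (distr lborel borel cpx) (box l u) = emeasure (lborel \<Otimes>\<^sub>M lborel) ({Re l<..<Re u} \<times> {Im l<..<Im u})"
    by (simp add: emeasure_distr eq lborel_prod)
  also have "\<dots> = ennreal (Re u - Re l) * ennreal (Im u - Im l)"
    using \<open>Re l \<le> Re u\<close> \<open>Im l \<le> Im u\<close> by (simp add: lborel.emeasure_pair_measure_Times)
  also have "\<dots> = (\<Prod>b\<in>Basis. (u - l) \<bullet> b)"
    using \<open>Re l \<le> Re u\<close> \<open>Im l \<le> Im u\<close>
    by (simp add: Basis_complex_def ennreal_mult)
  finally show "emeasure (distr lborel borel cpx) (box l u) = (\<Prod>b\<in>Basis. (u - l) \<bullet> b)" .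
qed simp


lemma shear1_meas[measurable]: "(\<lambda>p::real\<times>real. (fst p + t * snd p, snd p)) \<in> borel_measurable borel"
  by (intro borel_measurable_continuous_onI continuous_intros)
lemma shear2_meas[measurable]: "(\<lambda>p::real\<times>real. (fst p, snd p + t * fst p)) \<in> borel_measurable borel"
  by (intro borel_measurable_continuous_onI continuous_intros)
lemma shear1_meas'[measurable]: "(\<lambda>p::real\<times>real. (fst p + t * snd p + t' * (snd p + s * (fst p + t * snd p)), snd p + s * (fst p + t * snd p))) \<in> borel_measurable borel"
  by (intro borel_measurable_continuous_onI continuous_intros)

lemma nn_shear1:
  fixes f :: "real \<times> real \<Rightarrow> ennreal"
  assumes [measurable]: "f \<in> borel_measurable borel"
  shows "(\<integral>\<^sup>+p. f (fst p + t * snd p, snd p) \<partial>lborel) = (\<integral>\<^sup>+p. f p \<partial>lborel)"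
proof -
  have m1: "(\<lambda>p::real\<times>real. f (fst p + t * snd p, snd p)) \<in> borel_measurable (lborel \<Otimes>\<^sub>M lborel)"
    unfolding lborel_prod by measurable
  have m2: "f \<in> borel_measurable (lborel \<Otimes>\<^sub>M lborel)" unfolding lborel_prod by measurable
  have "(\<integral>\<^sup>+p. f (fst p + t * snd p, snd p) \<partial>lborel) = (\<integral>\<^sup>+p. f (fst p + t * snd p, snd p) \<partial>(lborel \<Otimes>\<^sub>M lborel))"
    by (simp add: lborel_prod)
  also have "\<dots> = (\<integral>\<^sup>+ y. (\<integral>\<^sup>+ x. f (x + t * y, y) \<partial>lborel) \<partial>lborel)"
    using lborel_pair.nn_integral_snd[OF m1] by simp
  also have "\<dots> = (\<integral>\<^sup>+ y. (\<integral>\<^sup>+ x. f (x, y) \<partial>lborel) \<partial>lborel)"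
  proof (rule nn_integral_cong)
    fix y :: real assume "y \<in> space lborel"
    have "(\<integral>\<^sup>+ x. f (x, y) \<partial>lborel) = (\<integral>\<^sup>+ x. f (t * y + x, y) \<partial>lborel)"
      using nn_integral_real_affine[of "\<lambda>x. f (x,y)" 1 "t*y"] by simp
    then show "(\<integral>\<^sup>+ x. f (x + t * y, y) \<partial>lborel) = (\<integral>\<^sup>+ x. f (x, y) \<partial>lborel)"
      by (simp add: add.commute)
  qed
  also have "\<dots> = (\<integral>\<^sup>+p. f p \<partial>(lborel \<Otimes>\<^sub>M lborel))"
    using lborel_pair.nn_integral_snd[OF m2] by simp
  finally show ?thesis by (simp add: lborel_prod)
qed

lemma nn_shear2:
  fixes f :: "real \<times> real \<Rightarrow> ennreal"
  assumes [measurable]: "f \<in> borel_measurable borel"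
  shows "(\<integral>\<^sup>+p. f (fst p, snd p + s * fst p) \<partial>lborel) = (\<integral>\<^sup>+p. f p \<partial>lborel)"
proof -
  have m1: "(\<lambda>p::real\<times>real. f (fst p, snd p + s * fst p)) \<in> borel_measurable (lborel \<Otimes>\<^sub>M lborel)"
    unfolding lborel_prod by measurable
  have m2: "f \<in> borel_measurable (lborel \<Otimes>\<^sub>M lborel)" unfolding lborel_prod by measurable
  have "(\<integral>\<^sup>+p. f (fst p, snd p + s * fst p) \<partial>lborel) = (\<integral>\<^sup>+p. f (fst p, snd p + s * fst p) \<partial>(lborel \<Otimes>\<^sub>M lborel))"
    by (simp add: lborel_prod)
  also have "\<dots> = (\<integral>\<^sup>+ x. (\<integral>\<^sup>+ y. f (x, y + s * x) \<partial>lborel) \<partial>lborel)"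
    using lborel.nn_integral_fst[OF m1] by simp
  also have "\<dots> = (\<integral>\<^sup>+ x. (\<integral>\<^sup>+ y. f (x, y) \<partial>lborel) \<partial>lborel)"
  proof (rule nn_integral_cong)
    fix x :: real assume "x \<in> space lborel"
    have "(\<integral>\<^sup>+ y. f (x, y) \<partial>lborel) = (\<integral>\<^sup>+ y. f (x, s * x + y) \<partial>lborel)"
      using nn_integral_real_affine[of "\<lambda>y. f (x,y)" 1 "s*x"] by simp
    then show "(\<integral>\<^sup>+ y. f (x, y + s * x) \<partial>lborel) = (\<integral>\<^sup>+ y. f (x, y) \<partial>lborel)"
      by (simp add: add.commute)
  qed
  also have "\<dots> = (\<integral>\<^sup>+p. f p \<partial>(lborel \<Otimes>\<^sub>M lborel))"
    using lborel.nn_integral_fst[OF m2] by simp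
  finally show ?thesis by (simp add: lborel_prod)
qed

lemma nn_cpx:
  fixes f :: "complex \<Rightarrow> ennreal"
  assumes [measurable]: "f \<in> borel_measurable borel"
  shows "(\<integral>\<^sup>+w. f w \<partial>lborel) = (\<integral>\<^sup>+p. f (cpx p) \<partial>lborel)"
  by (subst lborel_cpx[symmetric]) (simp add: nn_integral_distr)

lemma nn_rot:
  fixes f :: "complex \<Rightarrow> ennreal" and c s :: real
  assumes [measurable]: "f \<in> borel_measurable borel" and cs: "c^2 + s^2 = 1" "c \<noteq> -1"
  shows "(\<integral>\<^sup>+w. f (Complex c s * w) \<partial>lborel) = (\<integral>\<^sup>+w. f w \<partial>lborel)"
proof -
  define t where "t = s / (1 + c)"
  have ts: "t * s = 1 - c"
  proof -
    have "1 + c \<noteq> 0" using cs(2) by auto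
    then have "t * s = s^2 / (1 + c)" by (simp add: t_def power2_eq_square)
    also have "\<dots> = (1 - c) * (1 + c) / (1 + c)" using cs(1) by (simp add: algebra_simps power2_eq_square)
    also have "\<dots> = 1 - c" using \<open>1 + c \<noteq> 0\<close> by simp
    finally show ?thesis .
  qed
  define g1 where "g1 = (\<lambda>p::real\<times>real. f (cpx (fst p + (-t) * snd p, snd p)))"
  define g2 where "g2 = (\<lambda>p::real\<times>real. g1 (fst p, snd p + s * fst p))"
  have [measurable]: "g1 \<in> borel_measurable borel" unfolding g1_def by measurable
  have [measurable]: "g2 \<in> borel_measurable borel" unfolding g2_def by measurable
  have key: "Complex c s * cpx p = cpx (fst p + (-t) * snd p + (-t) * (snd p + s * (fst p + (-t) * snd p)),
                                         snd p + s * (fst p + (-t) * snd p))" for p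
  proof -
    have h2: "t * (1 + c) = s" using cs(2) unfolding t_def
      by (metis add.commute add_eq_0_iff nonzero_eq_divide_eq)
    show ?thesis unfolding cpx_def complex_eq_iff
      using ts h2 by (simp; algebra)
  qed
  have "(\<integral>\<^sup>+w. f (Complex c s * w) \<partial>lborel) = (\<integral>\<^sup>+p. f (Complex c s * cpx p) \<partial>lborel)"
    by (rule nn_cpx) measurable
  also have "\<dots> = (\<integral>\<^sup>+p. g2 (fst p + (-t) * snd p, snd p) \<partial>lborel)"
    by (simp add: key g1_def g2_def)
  also have "\<dots> = (\<integral>\<^sup>+p. g2 p \<partial>lborel)" by (rule nn_shear1) measurable
  also have "\<dots> = (\<integral>\<^sup>+p. g1 p \<partial>lborel)" unfolding g2_def by (rule nn_shear2) measurable
  also have "\<dots> = (\<integral>\<^sup>+p. f (cpx p) \<partial>lborel)" unfolding g1_def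
    using nn_shear1[of "\<lambda>p. f (cpx p)" "-t"] by simp
  also have "\<dots> = (\<integral>\<^sup>+w. f w \<partial>lborel)" by (rule nn_cpx[symmetric]) measurable
  finally show ?thesis .
qed


lemma fst_cr_meas[measurable]: "(fst :: complex\<times>real \<Rightarrow> complex) \<in> borel_measurable borel"
  by (intro borel_measurable_continuous_onI continuous_intros)
lemma snd_cr_meas[measurable]: "(snd :: complex\<times>real \<Rightarrow> real) \<in> borel_measurable borel"
  by (intro borel_measurable_continuous_onI continuous_intros)
lemma rot_meas[measurable]: "(\<lambda>w. Complex c s * w) \<in> borel_measurable borel"
  by (intro borel_measurable_continuous_onI continuous_intros)

lemma distr_rot:
  assumes cs: "c^2 + s^2 = 1" "c \<noteq> -1"
  shows "distr lborel borel (\<lambda>w. Complex c s * w) = (lborel :: complex measure)"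
proof (rule measure_eqI)
  show "sets (distr lborel borel (\<lambda>w. Complex c s * w)) = sets (lborel :: complex measure)" by simp
  fix A :: "complex set" assume "A \<in> sets (distr lborel borel (\<lambda>w. Complex c s * w))"
  then have A[measurable]: "A \<in> sets borel" by simp
  have "emeasure (distr lborel borel (\<lambda>w. Complex c s * w)) A = emeasure lborel ((\<lambda>w. Complex c s * w) -` A)"
    by (simp add: emeasure_distr)
  also have "\<dots> = (\<integral>\<^sup>+w. indicator ((\<lambda>w. Complex c s * w) -` A) w \<partial>lborel)"
    using measurable_sets_borel[OF rot_meas A] by simp
  also have "\<dots> = (\<integral>\<^sup>+w. indicator A (Complex c s * w) \<partial>lborel)"
    by (simp add: indicator_def)
  also have "\<dots> = (\<integral>\<^sup>+w. indicator A w \<partial>lborel)"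
    by (rule nn_rot[OF _ cs]) measurable
  also have "\<dots> = emeasure lborel A" by simp
  finally show "emeasure (distr lborel borel (\<lambda>w. Complex c s * w)) A = emeasure lborel A" .
qed

lemma integral_rot:
  fixes g :: "complex \<Rightarrow> complex"
  assumes [measurable]: "g \<in> borel_measurable borel" and cs: "c^2 + s^2 = 1" "c \<noteq> -1"
  shows "(\<integral>w. g (Complex c s * w) \<partial>lborel) = (\<integral>w. g w \<partial>lborel)"
proof -
  have "(\<integral>w. g w \<partial>lborel) = (\<integral>w. g w \<partial>(distr lborel borel (\<lambda>w. Complex c s * w)))"
    by (simp add: distr_rot[OF cs])
  also have "\<dots> = (\<integral>w. g (Complex c s * w) \<partial>lborel)"
    by (rule integral_distr) measurable
  finally show ?thesis by simp
qed

lemma emeasure_cball_c: "0 \<le> r \<Longrightarrow> emeasure lborel (ball (0::complex) r) = ennreal (pi * r^2)"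
  by (simp add: emeasure_ball unit_ball_vol_2)

lemma emeasure_shell:
  assumes "0 \<le> t" "t \<le> s"
  shows "emeasure lborel {w::complex. t \<le> norm w \<and> norm w < s} = ennreal (pi * (s^2 - t^2))"
proof -
  have eq: "{w::complex. t \<le> norm w \<and> norm w < s} = ball 0 s - ball 0 t" by auto
  have "emeasure lborel (ball (0::complex) s - ball 0 t) = emeasure lborel (ball (0::complex) s) - emeasure lborel (ball (0::complex) t)"
    using assms by (intro emeasure_Diff) (auto simp: emeasure_cball_c)
  also have "\<dots> = ennreal (pi * s^2 - pi * t^2)"
    using assms by (simp add: emeasure_cball_c ennreal_minus power_mono)
  finally show ?thesis by (simp add: eq algebra_simps)
qed

lemma radial_nn:
  assumes "0 \<le> s" "1 \<le> m"
  shows "(\<integral>\<^sup>+w. ennreal (indicator (ball (0::complex) s) w * norm w ^ m) \<partial>lborel)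
          = ennreal (2 * pi * s^(m+2) / (m+2))"
proof -
  define h where "h = (\<lambda>(w::complex,t::real). ennreal (real m * t^(m-1)) * indicator {0..norm w} t * indicator (ball 0 s) w)"
  have hm[measurable]: "h \<in> borel_measurable (lborel \<Otimes>\<^sub>M lborel)"
    unfolding h_def lborel_prod
  proof -
    have E: "(indicator {0..norm (fst p)} (snd p) :: ennreal) = indicator {p::complex\<times>real. 0 \<le> snd p \<and> snd p \<le> norm (fst p)} p" for p
      by (auto simp: indicator_def fun_eq_iff)
    have S: "{p::complex\<times>real. 0 \<le> snd p \<and> snd p \<le> norm (fst p)} \<in> sets borel"
      by (intro borel_closed closed_Collect_conj closed_Collect_le continuous_intros)
    have [measurable]: "ball (0::complex) s \<in> sets borel" by simp
    note S[measurable]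
    show "(\<lambda>(w::complex, t). ennreal (real m * t ^ (m - 1)) * indicator {0..norm w} t * indicator (ball 0 s) w) \<in> borel_measurable lborel"
      unfolding case_prod_beta by (simp only: E measurable_lborel2) measurable
  qed
  have "(\<integral>\<^sup>+w. ennreal (indicator (ball (0::complex) s) w * norm w ^ m) \<partial>lborel)
      = (\<integral>\<^sup>+w. (\<integral>\<^sup>+t. h (w,t) \<partial>lborel) \<partial>lborel)"
  proof (rule nn_integral_cong)
    fix w :: complex assume "w \<in> space lborel"
    have "(\<integral>\<^sup>+t. ennreal (real m * t^(m-1)) * indicator {0..norm w} t \<partial>lborel) = ennreal (norm w ^ m - 0 ^ m)"
      using assms(2) by (intro nn_integral_FTC_Icc[where F="\<lambda>t. t^m" and f="\<lambda>t. real m * t^(m-1)"]) (auto intro!: derivative_eq_intros)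
    also have "\<dots> = ennreal (norm w ^ m)" using assms(2) by simp
    finally have *: "(\<integral>\<^sup>+t. ennreal (real m * t^(m-1)) * indicator {0..norm w} t \<partial>lborel) = ennreal (norm w ^ m)" .
    have "(\<integral>\<^sup>+t. h (w,t) \<partial>lborel) = (\<integral>\<^sup>+t. ennreal (real m * t^(m-1)) * indicator {0..norm w} t \<partial>lborel) * indicator (ball 0 s) w"
      unfolding h_def by (simp add: nn_integral_multc)
    also have "\<dots> = ennreal (indicator (ball (0::complex) s) w * norm w ^ m)"
    proof (cases "w \<in> ball 0 s")
      case True then show ?thesis by (simp only: * indicator_simps mult_1_right mult_1_left)
    next
      case False then show ?thesis by (simp only: False not_False_eq_True indicator_simps mult_zero_right mult_zero_left ennreal_0 if_False)
    qed
    finally show "ennreal (indicator (ball (0::complex) s) w * norm w ^ m) = (\<integral>\<^sup>+t. h (w,t) \<partial>lborel)" by (rule sym)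
  qed
  also have "\<dots> = (\<integral>\<^sup>+t. (\<integral>\<^sup>+w. h (w,t) \<partial>lborel) \<partial>lborel)"
    by (rule lborel_pair.Fubini[OF hm, symmetric])
  also have "\<dots> = (\<integral>\<^sup>+t. ennreal (pi * real m * t^(m-1) * (s^2 - t^2)) * indicator {0..s} t \<partial>lborel)"
  proof (rule nn_integral_cong)
    fix t :: real assume "t \<in> space lborel"
    show "(\<integral>\<^sup>+w. h (w,t) \<partial>lborel) = ennreal (pi * real m * t^(m-1) * (s^2 - t^2)) * indicator {0..s} t"
    proof (cases "0 \<le> t \<and> t \<le> s")
      case True
      have "(\<integral>\<^sup>+w. h (w,t) \<partial>lborel) = ennreal (real m * t^(m-1)) * (\<integral>\<^sup>+w. indicator {w::complex. t \<le> norm w \<and> norm w < s} w \<partial>lborel)"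
        unfolding h_def using True
        by (subst nn_integral_cmult[symmetric]) (auto intro!: nn_integral_cong simp: indicator_def)
      also have "\<dots> = ennreal (real m * t^(m-1)) * ennreal (pi * (s^2 - t^2))"
        using True by (simp add: emeasure_shell)
      also have "\<dots> = ennreal (pi * real m * t^(m-1) * (s^2 - t^2)) * indicator {0..s} t"
        using True by (simp add: ennreal_mult[symmetric] power_mono)
      finally show ?thesis .
    next
      case False
      then have "h (w,t) = 0" for w unfolding h_def by (auto simp: indicator_def)
      then show ?thesis using False by (simp add: indicator_def)
    qed
  qed
  also have "\<dots> = ennreal (pi * (s^2 * s^m - real m * s^(m+2) / (m+2)) - pi * (s^2 * 0^m - real m * 0^(m+2) / (m+2)))"
  proof (rule nn_integral_FTC_Icc)
    fix t assume t: "t \<in> {0..s}"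
    show "((\<lambda>t. pi * (s^2 * t^m - real m * t^(m+2) / (m+2))) has_real_derivative pi * real m * t^(m-1) * (s^2 - t^2)) (at t)"
    proof -
      have e: "t^(m+1) = t^(m-1) * t^2"
        by (subst power_add[symmetric]) (use assms(2) in simp)
      obtain k where k: "m = Suc k" using assms(2) by (cases m) auto
      have m2: "real k + 3 \<noteq> 0" by simp
      have pos: "0 < real k * real k + (9 + real k * 6)" by (simp add: add_nonneg_pos)
      show ?thesis
        apply (rule derivative_eq_intros refl)+
          apply simp
         apply (rule refl)
        apply (rule refl)
        unfolding k using m2 
        apply (simp add: field_simps power2_eq_square)
        apply (subst eq_divide_eq)
        apply (auto simp: algebra_simps)
        using pos apply linarith
        done
    qed
    have "t^2 \<le> s^2" using t by (intro power_mono) auto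
    then show "0 \<le> pi * real m * t^(m-1) * (s^2 - t^2)" using t by simp
  qed (use assms in auto)
  also have "\<dots> = ennreal (2 * pi * s^(m+2) / (m+2))"
  proof -
    have "pi * (s^2 * s^m - real m * s^(m+2) / (m+2)) = 2 * pi * s^(m+2) / (m+2)"
      by (simp add: field_simps power_add power2_eq_square)
    moreover have "(0::real)^m = 0" using assms(2) by simp
    ultimately show ?thesis using assms(2) by (simp add: power_0_left)
  qed
  finally show ?thesis .
qed

lemma radial_nn0:
  assumes "0 \<le> s"
  shows "(\<integral>\<^sup>+w. ennreal (indicator (ball (0::complex) s) w * norm w ^ 0) \<partial>lborel)
          = ennreal (2 * pi * s^(0+2) / (0+2))"
  using assms by (simp add: emeasure_cball_c ennreal_indicator power2_eq_square)

lemma radial_ball: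
  assumes "0 \<le> s"
  shows "has_bochner_integral lborel (\<lambda>w::complex. indicator (ball 0 s) w * norm w ^ m) (2 * pi * s^(m+2) / (m+2))"
proof (rule has_bochner_integral_nn_integral)
  show "(\<integral>\<^sup>+w. ennreal (indicator (ball (0::complex) s) w * norm w ^ m) \<partial>lborel) = ennreal (2 * pi * s^(m+2) / (m+2))"
    using radial_nn[OF assms, of m] radial_nn0[OF assms] by (cases "m = 0") auto
  have [measurable]: "ball (0::complex) s \<in> sets borel" by simp
  show "(\<lambda>w::complex. indicator (ball 0 s) w * norm w ^ m) \<in> borel_measurable lborel" by (simp only: measurable_lborel2) measurable
qed (use assms in auto)


lemma annulus_open: "open (annulus a b)"
proof -
  have "annulus a b = norm -` {a<..<b}" by (auto simp: annulus_def)
  then show ?thesis by (metis continuous_on_norm_id open_greaterThanLessThan open_vimage)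
qed

lemma annulus_sets[measurable]: "annulus a b \<in> sets borel"
  using annulus_open by simp

lemma ball_sets_c[measurable]: "ball (c::complex) r \<in> sets borel" by simp
lemma cnj_meas[measurable]: "cnj \<in> borel_measurable borel"
  by (intro borel_measurable_continuous_onI continuous_intros)
lemma cmod_c_meas[measurable]: "(\<lambda>x::complex. complex_of_real (cmod x)) \<in> borel_measurable borel"
  by (intro borel_measurable_continuous_onI continuous_intros)
lemma cpow_meas[measurable]: "(\<lambda>x::complex. x ^ k) \<in> borel_measurable borel"
  by (intro borel_measurable_continuous_onI continuous_intros)

lemma annulus_sub: "annulus a b \<subseteq> ball 0 b"
  by (auto simp: annulus_def)

lemma annulus_finite: "emeasure lborel (annulus a b) < \<infinity>"
proof -
  have "bounded (annulus a b)" using annulus_sub bounded_ball bounded_subset by metis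
  then show ?thesis by (rule emeasure_bounded_finite)
qed

lemma sphere_null: "sphere (c::complex) r \<in> null_sets lborel"
  using negligible_sphere[of c r]
  by (auto simp: null_sets_completion_iff negligible_iff_null_sets negligible_convex_frontier)

lemma AE_norm_neq: "AE w in lborel. norm (w::complex) \<noteq> r"
proof -
  have "{w::complex. norm w = r} = sphere 0 r" by auto
  then show ?thesis using sphere_null[of 0 r]
    by (intro AE_I'[of "sphere 0 r"]) auto
qed

lemma radial_ann:
  assumes "0 \<le> a" "a \<le> b"
  shows "has_bochner_integral lborel (\<lambda>w::complex. indicator (annulus a b) w * norm w ^ m)
           (2 * pi * b^(m+2) / (m+2) - 2 * pi * a^(m+2) / (m+2))"
proof -
  have h: "has_bochner_integral lborel (\<lambda>w::complex. indicator (ball 0 b) w * norm w ^ m - indicator (ball 0 a) w * norm w ^ m)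
           (2 * pi * b^(m+2) / (m+2) - 2 * pi * a^(m+2) / (m+2))"
    using assms by (intro has_bochner_integral_diff radial_ball) auto
  have [measurable]: "(\<lambda>w::complex. norm w ^ m) \<in> borel_measurable borel" by measurable
  show ?thesis
  proof (rule has_bochner_integral_cong_AE[THEN iffD1, OF _ _ _ h])
    show "AE w in lborel. indicator (ball 0 b) w * norm w ^ m - indicator (ball 0 a) w * norm w ^ m
            = indicator (annulus a b) w * norm (w::complex) ^ m"
      using AE_norm_neq[of a]
    proof (rule AE_mp, intro AE_I2 impI)
      fix w :: complex assume "norm w \<noteq> a"
      then show "indicator (ball 0 b) w * norm w ^ m - indicator (ball 0 a) w * norm w ^ m
            = indicator (annulus a b) w * norm w ^ m"
        using assms by (auto simp: indicator_def annulus_def)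
    qed
  qed auto
qed

definition gk :: "real \<Rightarrow> real \<Rightarrow> nat \<Rightarrow> nat \<Rightarrow> complex \<Rightarrow> complex" where
  "gk a b m k w = indicator (annulus a b) w * (cnj w / of_real (cmod w))^m * w^k"

lemma gk_meas[measurable]: "gk a b m k \<in> borel_measurable borel"
  unfolding gk_def by measurable

lemma gk_bound:
  assumes "0 \<le> b"
  shows "norm (gk a b m k w) \<le> b^k * indicator (annulus a b) w"
proof (cases "w \<in> annulus a b")
  case True
  then have w: "norm w < b" by (auto simp: annulus_def)
  have "norm (cnj w / of_real (cmod w)) \<le> 1"
    by (cases "w = 0") (simp_all add: norm_divide)
  then have "norm ((cnj w / of_real (cmod w))^m) \<le> 1"
    by (simp add: norm_power power_le_one)
  moreover have "norm w ^ k \<le> b ^ k" using w by (intro power_mono) auto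
  ultimately show ?thesis using True
    by (simp add: gk_def norm_mult norm_power) (metis mult_le_one mult_right_mono norm_ge_zero zero_le_power mult_1_left order_trans)
qed (simp add: gk_def)

lemma gk_integrable:
  assumes "0 \<le> b"
  shows "integrable lborel (gk a b m k)"
proof (rule integrableI_bounded_set[where A="annulus a b" and B="b^k"])
  show "emeasure lborel (annulus a b) < \<infinity>" by (rule annulus_finite)
  show "AE x in lborel. x \<in> annulus a b \<longrightarrow> norm (gk a b m k x) \<le> b ^ k"
  proof (rule AE_I2, rule impI)
    fix x assume "x \<in> annulus a b"
    then show "norm (gk a b m k x) \<le> b ^ k" using gk_bound[OF assms, of a m k x] by simp
  qed
  show "AE x in lborel. x \<notin> annulus a b \<longrightarrow> gk a b m k x = 0"
    by (auto intro!: AE_I2 simp: gk_def)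
qed auto

lemma gk_rot:
  assumes "norm \<zeta> = 1"
  shows "gk a b m k (\<zeta> * w) = cnj \<zeta> ^ m * \<zeta> ^ k * gk a b m k w"
proof -
  have n: "norm (\<zeta> * w) = norm w" using assms by (simp add: norm_mult)
  have "indicator (annulus a b) (\<zeta> * w) = (indicator (annulus a b) w :: complex)"
    by (simp add: indicator_def annulus_def n)
  moreover have "cnj (\<zeta> * w) / of_real (cmod (\<zeta> * w)) = cnj \<zeta> * (cnj w / of_real (cmod w))"
    by (simp add: n)
  ultimately have "gk a b m k (\<zeta> * w) = indicator (annulus a b) w * (cnj \<zeta> * (cnj w / of_real (cmod w)))^m * (\<zeta> * w)^k"
    unfolding gk_def by (simp only:)
  also have "\<dots> = cnj \<zeta> ^ m * \<zeta> ^ k * gk a b m k w"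
    unfolding gk_def power_mult_distrib by (simp only: mult_ac)
  finally show ?thesis .
qed

lemma gk_ortho:
  assumes "0 \<le> b" "k \<noteq> m"
  shows "integral\<^sup>L lborel (gk a b m k) = 0"
proof -
  define q :: int where "q = int k - int m"
  have q0: "q \<noteq> 0" using assms by (simp add: q_def)
  define \<theta> where "\<theta> = pi / (2 * \<bar>of_int q\<bar>)"
  define \<zeta> where "\<zeta> = Complex (cos \<theta>) (sin \<theta>)"
  have \<zeta>cis: "\<zeta> = cis \<theta>" by (simp add: \<zeta>_def cis.ctr)
  have n\<zeta>: "norm \<zeta> = 1" by (simp add: \<zeta>cis)
  have th: "0 < \<theta>" "\<theta> \<le> pi / 2"
    using q0 by (auto simp: \<theta>_def divide_simps)
  have cpos: "cos \<theta> \<ge> 0" using th by (intro cos_ge_zero) auto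
  have rotI: "(\<integral>w. gk a b m k (Complex (cos \<theta>) (sin \<theta>) * w) \<partial>lborel) = (\<integral>w. gk a b m k w \<partial>lborel)"
    by (rule integral_rot) (use cpos in auto)
  have fac: "cnj \<zeta> ^ m * \<zeta> ^ k = cis (of_int q * \<theta>)"
  proof -
    have c1: "cnj \<zeta> ^ m = cis (real m * (- \<theta>))"
      unfolding \<zeta>cis cis_cnj by (rule Complex.DeMoivre)
    have c2: "\<zeta> ^ k = cis (real k * \<theta>)"
      unfolding \<zeta>cis by (rule Complex.DeMoivre)
    have "cnj \<zeta> ^ m * \<zeta> ^ k = cis (- (real m * \<theta>)) * cis (real k * \<theta>)"
      by (simp add: c1 c2)
    also have "\<dots> = cis (of_int q * \<theta>)"
      by (simp add: cis_mult q_def algebra_simps)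
    finally show ?thesis .
  qed
  have ne: "cis (of_int q * \<theta>) \<noteq> 1"
  proof -
    have "of_int q * \<theta> = (if q > 0 then pi/2 else - (pi/2))"
      using q0 by (auto simp: \<theta>_def field_simps)
    then show ?thesis by (auto simp: complex_eq_iff)
  qed
  have "(\<integral>w. gk a b m k w \<partial>lborel) = (\<integral>w. cis (of_int q * \<theta>) * gk a b m k w \<partial>lborel)"
    using rotI by (simp add: \<zeta>_def[symmetric] gk_rot[OF n\<zeta>] fac)
  also have "\<dots> = cis (of_int q * \<theta>) * (\<integral>w. gk a b m k w \<partial>lborel)"
    by simp
  finally have "(1 - cis (of_int q * \<theta>)) * (\<integral>w. gk a b m k w \<partial>lborel) = 0"
    by (simp add: algebra_simps)
  then show ?thesis using ne by simp
qed

lemma gk_diag: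
  assumes "0 \<le> a" "a \<le> b"
  shows "integral\<^sup>L lborel (gk a b m m) = of_real (2 * pi * b^(m+2) / (m+2) - 2 * pi * a^(m+2) / (m+2))"
proof -
  have eq: "gk a b m m w = of_real (indicator (annulus a b) w * norm w ^ m)" for w
  proof (cases "w \<in> annulus a b")
    case True
    then have w: "w \<noteq> 0" using assms by (auto simp: annulus_def)
    have "(cnj w / of_real (cmod w))^m * w^m = (cnj w * w)^m / of_real (cmod w) ^ m"
      by (simp add: power_divide power_mult_distrib)
    also have "\<dots> = of_real (cmod w ^ 2) ^ m / of_real (cmod w) ^ m"
      by (simp only: mult.commute[of "cnj w"] complex_mult_cnj cmod_power2[symmetric] of_real_power)
    also have "\<dots> = of_real (cmod w ^ m)"
      using w by (simp add: power2_eq_square power_mult_distrib divide_simps)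
    finally show ?thesis using True by (simp add: gk_def mult.assoc)
  qed (simp add: gk_def)
  show ?thesis
    unfolding eq integral_complex_of_real
    using has_bochner_integral_integral_eq[OF radial_ann[OF assms, of m]] by simp
qed


lemma sums_single_idx:
  fixes f :: "nat \<Rightarrow> 'a::real_normed_vector"
  assumes "\<And>k. k \<noteq> j \<Longrightarrow> f k = 0"
  shows "f sums f j"
proof -
  have "f = (\<lambda>k. if k = j then f k else 0)" using assms by (auto simp: fun_eq_iff)
  then show ?thesis using sums_single[of j f] by metis
qed

lemma piece_series:
  fixes c :: "nat \<Rightarrow> complex" and K :: "complex \<Rightarrow> complex"
  assumes ab: "0 \<le> a" "a \<le> b"
    and K: "\<And>w. norm w < b \<Longrightarrow> (\<lambda>k. c k * w^k) sums K w"
    and sumc: "summable (\<lambda>k. norm (c k) * b^k)"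
  shows "has_bochner_integral lborel (\<lambda>w. indicator (annulus a b) w * (cnj w / of_real (cmod w))^m * K w)
           (c m * of_real (2 * pi * b^(m+2) / (m+2) - 2 * pi * a^(m+2) / (m+2)))"
proof -
  have b0: "0 \<le> b" using ab by simp
  define f where "f = (\<lambda>k w. c k * gk a b m k w)"
  define M where "M = measure lborel (annulus a b)"
  have fint: "integrable lborel (f k)" for k
    unfolding f_def using gk_integrable[OF b0] by simp
  have fb: "norm (f k w) \<le> norm (c k) * b^k * indicator (annulus a b) w" for k w
    unfolding f_def norm_mult using gk_bound[OF b0, of a m k w]
    by (simp add: mult.assoc mult_left_mono)
  have pt: "(\<lambda>k. f k w) sums (indicator (annulus a b) w * (cnj w / of_real (cmod w))^m * K w)" for w
  proof (cases "w \<in> annulus a b")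
    case True
    then have "norm w < b" by (simp add: annulus_def)
    from sums_mult[OF K[OF this], of "(cnj w / of_real (cmod w))^m"]
    show ?thesis using True unfolding f_def gk_def by (simp add: mult_ac)
  next
    case False
    then show ?thesis unfolding f_def gk_def by simp
  qed
  have sn: "summable (\<lambda>k. norm (f k w))" for w
  proof (rule summable_comparison_test'[where N=0])
    show "summable (\<lambda>k. norm (c k) * b^k * indicator (annulus a b) w)"
      by (rule summable_mult2[OF sumc])
    show "norm (norm (f k w)) \<le> norm (c k) * b^k * indicator (annulus a b) w" for k
      using fb by simp
  qed
  have intn: "(\<integral>w. norm (f k w) \<partial>lborel) \<le> norm (c k) * b^k * M" for k
  proof -
    have "(\<integral>w. norm (f k w) \<partial>lborel) \<le> (\<integral>w. norm (c k) * b^k * indicator (annulus a b) w \<partial>lborel)"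
    proof (rule integral_mono)
      show "integrable lborel (\<lambda>w. norm (f k w))" using fint by simp
      show "integrable lborel (\<lambda>w. norm (c k) * b^k * indicator (annulus a b) w :: real)"
        using annulus_finite[of a b] by (intro integrable_mult_right integrable_real_indicator) auto
    qed (use fb in auto)
    also have "\<dots> = norm (c k) * b^k * M"
      using annulus_finite[of a b] by (simp add: M_def)
    finally show ?thesis .
  qed
  have ss: "summable (\<lambda>k. (\<integral>w. norm (f k w) \<partial>lborel))"
  proof (rule summable_comparison_test'[where N=0])
    show "summable (\<lambda>k. norm (c k) * b^k * M)" by (rule summable_mult2[OF sumc])
    show "norm (\<integral>w. norm (f k w) \<partial>lborel) \<le> norm (c k) * b^k * M" for k
      using intn[of k] by simp
  qed
  have S1: "(\<lambda>k. integral\<^sup>L lborel (f k)) sums (\<integral>w. (\<Sum>k. f k w) \<partial>lborel)"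
    by (rule sums_integral[OF fint]) (use sn ss in auto)
  have I1: "integrable lborel (\<lambda>w. (\<Sum>k. f k w))"
    by (rule integrable_suminf[OF fint]) (use sn ss in auto)
  have fk: "integral\<^sup>L lborel (f k) = (if k = m then c m * of_real (2 * pi * b^(m+2) / (m+2) - 2 * pi * a^(m+2) / (m+2)) else 0)" for k
    unfolding f_def using gk_ortho[OF b0, of k m a] gk_diag[OF ab, of m] by auto
  have S2: "(\<lambda>k. integral\<^sup>L lborel (f k)) sums (c m * of_real (2 * pi * b^(m+2) / (m+2) - 2 * pi * a^(m+2) / (m+2)))"
    using sums_single_idx[of m "\<lambda>k. integral\<^sup>L lborel (f k)"] fk by simp
  have eqI: "(\<integral>w. (\<Sum>k. f k w) \<partial>lborel) = c m * of_real (2 * pi * b^(m+2) / (m+2) - 2 * pi * a^(m+2) / (m+2))"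
    using sums_unique2[OF S1 S2] .
  have eqf: "(\<lambda>w. (\<Sum>k. f k w)) = (\<lambda>w. indicator (annulus a b) w * (cnj w / of_real (cmod w))^m * K w)"
    using pt by (auto simp: fun_eq_iff sums_iff)
  show ?thesis
    using I1 eqI unfolding eqf by (simp add: has_bochner_integral_iff)
qed


lemma nseq_ge2: "3 \<le> d \<Longrightarrow> 2 \<le> nseq d j"
proof -
  assume d: "3 \<le> d"
  have "1 \<le> d ^ j" using d by simp
  then have "2 * 1 \<le> (d - 1) * d ^ j" using d by (intro mult_mono) auto
  then show ?thesis by (simp add: nseq_def)
qed

lemma nseq_Suc: "nseq d (Suc j) = d * nseq d j"
  by (simp add: nseq_def)

lemma powr_base_lt1_less:
  assumes "0 < (x::real)" "x < 1" "s < t"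
  shows "x powr t < x powr s"
proof -
  have "ln x < 0" using assms by (simp add: ln_less_zero)
  then have "t * ln x < s * ln x" using assms(3) by (simp add: mult_strict_right_mono_neg)
  then show ?thesis using assms by (simp add: powr_def)
qed

context
  fixes d :: nat and \<rho>0 :: real
  assumes d3: "3 \<le> d" and r0: "0 < \<rho>0" and r1: "\<rho>0 < 1"
begin

lemma nseq_pos': "0 < real (nseq d j)"
  using nseq_ge2[OF d3, of j] by simp

lemma rseq_pos: "0 < rseq d \<rho>0 j"
  using r0 by (simp add: rseq_def)

lemma rseq_lt1: "rseq d \<rho>0 j < 1"
proof -
  have "\<rho>0 powr (1 / real (nseq d j)) < \<rho>0 powr 0"
    using nseq_pos'[of j] r0 r1 by (intro powr_base_lt1_less) auto
  then show ?thesis using r0 by (simp add: rseq_def)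
qed

lemma rseq_strict: "rseq d \<rho>0 j < rseq d \<rho>0 (Suc j)"
proof -
  have n: "0 < real (nseq d j)" by (rule nseq_pos')
  have "real (nseq d (Suc j)) = real d * real (nseq d j)" by (simp add: nseq_Suc)
  then have "1 / real (nseq d (Suc j)) < 1 / real (nseq d j)"
    using n d3 by (simp add: divide_simps)
  then show ?thesis unfolding rseq_def using r0 r1 by (intro powr_base_lt1_less) auto
qed

lemma rseq_mono: "i \<le> j \<Longrightarrow> rseq d \<rho>0 i \<le> rseq d \<rho>0 j"
  by (rule lift_Suc_mono_le[of "rseq d \<rho>0"]) (use rseq_strict less_imp_le in blast)

lemma rseq_smono: "i < j \<Longrightarrow> rseq d \<rho>0 i < rseq d \<rho>0 j"
  by (rule lift_Suc_mono_less[of "rseq d \<rho>0"]) (use rseq_strict in blast)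

lemma powr_pow_nat: "0 < x \<Longrightarrow> (x powr e) ^ n = x powr (e * real n)"
  by (simp add: powr_realpow[symmetric] powr_powr)

lemma rseq_pow: "rseq d \<rho>0 j ^ nseq d j = \<rho>0"
  unfolding rseq_def using r0 nseq_pos'[of j] by (simp add: powr_pow_nat)

lemma rseq_Suc_pow: "rseq d \<rho>0 (Suc j) ^ nseq d j = \<rho>0 powr (1 / real d)"
proof -
  have "rseq d \<rho>0 (Suc j) ^ nseq d j = \<rho>0 powr (1 / real (nseq d (Suc j)) * real (nseq d j))"
    unfolding rseq_def using r0 by (simp add: powr_pow_nat)
  also have "1 / real (nseq d (Suc j)) * real (nseq d j) = 1 / real d"
    using nseq_pos'[of j] by (simp add: nseq_Suc)
  finally show ?thesis .
qed

lemma rseq_Suc_pow_d: "rseq d \<rho>0 (Suc j) ^ d = rseq d \<rho>0 j"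
proof -
  have "rseq d \<rho>0 (Suc j) ^ d = \<rho>0 powr (1 / real (nseq d (Suc j)) * real d)"
    unfolding rseq_def using r0 by (simp add: powr_pow_nat)
  also have "1 / real (nseq d (Suc j)) * real d = 1 / real (nseq d j)"
    using nseq_pos'[of j] d3 by (simp add: nseq_Suc)
  finally show ?thesis by (simp add: rseq_def)
qed

lemma rseq_unique:
  assumes "rseq d \<rho>0 i < x \<and> x < rseq d \<rho>0 (Suc i)" "rseq d \<rho>0 j < x \<and> x < rseq d \<rho>0 (Suc j)"
  shows "i = j"
proof (rule ccontr)
  assume "i \<noteq> j"
  then consider "i < j" | "j < i" by linarith
  then show False
  proof cases
    case 1 then have "Suc i \<le> j" by simp
    then have "rseq d \<rho>0 (Suc i) \<le> rseq d \<rho>0 j" by (rule rseq_mono)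
    then show False using assms by linarith
  next
    case 2 then have "Suc j \<le> i" by simp
    then have "rseq d \<rho>0 (Suc j) \<le> rseq d \<rho>0 i" by (rule rseq_mono)
    then show False using assms by linarith
  qed
qed

lemma mu_in:
  assumes "rseq d \<rho>0 j < cmod z" "cmod z < rseq d \<rho>0 (Suc j)"
  shows "mu d \<rho>0 z = (cnj z / of_real (cmod z)) ^ (nseq d j - 2)"
proof -
  have "(THE j. rseq d \<rho>0 j < cmod z \<and> cmod z < rseq d \<rho>0 (Suc j)) = j"
  proof (rule the_equality)
    show "rseq d \<rho>0 j < cmod z \<and> cmod z < rseq d \<rho>0 (Suc j)" using assms by simp
    fix i assume "rseq d \<rho>0 i < cmod z \<and> cmod z < rseq d \<rho>0 (Suc i)"
    then show "i = j" using assms rseq_unique[of i "cmod z" j] by blast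
  qed
  then show ?thesis using assms unfolding mu_def by auto
qed

lemma mu_out:
  assumes "\<not> (\<exists>j. rseq d \<rho>0 j < cmod z \<and> cmod z < rseq d \<rho>0 (Suc j))"
  shows "mu d \<rho>0 z = 0"
  using assms unfolding mu_def by auto

lemma mu_zero_ge1: "1 \<le> cmod z \<Longrightarrow> mu d \<rho>0 z = 0"
proof (rule mu_out)
  assume "1 \<le> cmod z"
  show "\<not> (\<exists>j. rseq d \<rho>0 j < cmod z \<and> cmod z < rseq d \<rho>0 (Suc j))"
  proof
    assume "\<exists>j. rseq d \<rho>0 j < cmod z \<and> cmod z < rseq d \<rho>0 (Suc j)"
    then obtain j where "cmod z < rseq d \<rho>0 (Suc j)" by blast
    moreover have "rseq d \<rho>0 (Suc j) < 1" by (rule rseq_lt1)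
    ultimately show False using \<open>1 \<le> cmod z\<close> by linarith
  qed
qed

definition P :: "nat \<Rightarrow> complex \<Rightarrow> complex" where
  "P j = gk (rseq d \<rho>0 j) (rseq d \<rho>0 (Suc j)) (nseq d j - 2) 0"

lemma P_meas[measurable]: "P j \<in> borel_measurable borel"
  unfolding P_def by measurable

lemma P_gk: "P j w = gk (rseq d \<rho>0 j) (rseq d \<rho>0 (Suc j)) (nseq d j - 2) 0 w"
  by (simp add: P_def)

lemma P_zero: "w \<notin> annulus (rseq d \<rho>0 j) (rseq d \<rho>0 (Suc j)) \<Longrightarrow> P j w = 0"
  by (simp add: P_def gk_def)

lemma P_bound: "norm (P j w) \<le> indicator (annulus (rseq d \<rho>0 j) (rseq d \<rho>0 (Suc j))) w"
  unfolding P_def using gk_bound[of "rseq d \<rho>0 (Suc j)" "rseq d \<rho>0 j" "nseq d j - 2" 0 w] rseq_pos[of "Suc j"]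
  by simp

lemma P_sums: "(\<lambda>j. P j w) sums mu d \<rho>0 w"
proof (cases "\<exists>j. rseq d \<rho>0 j < cmod w \<and> cmod w < rseq d \<rho>0 (Suc j)")
  case True
  then obtain j where j: "rseq d \<rho>0 j < cmod w" "cmod w < rseq d \<rho>0 (Suc j)" by blast
  have "P k w = 0" if "k \<noteq> j" for k
  proof -
    have "w \<notin> annulus (rseq d \<rho>0 k) (rseq d \<rho>0 (Suc k))"
      using rseq_unique[of k "cmod w" j] j that by (auto simp: annulus_def)
    then show ?thesis by (simp add: P_def gk_def)
  qed
  then have "(\<lambda>j. P j w) sums P j w" by (rule sums_single_idx)
  moreover have "P j w = mu d \<rho>0 w"
    using j by (simp add: P_def gk_def annulus_def mu_in)
  ultimately show ?thesis by simp
next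
  case False
  have "P k w = 0" for k
  proof -
    have "w \<notin> annulus (rseq d \<rho>0 k) (rseq d \<rho>0 (Suc k))" using False by (auto simp: annulus_def)
    then show ?thesis by (simp add: P_def gk_def)
  qed
  then show ?thesis using mu_out[OF False] by simp
qed

lemma mu_meas[measurable]: "mu d \<rho>0 \<in> borel_measurable borel"
proof -
  have "mu d \<rho>0 = (\<lambda>w. \<Sum>j. P j w)" using P_sums by (auto simp: fun_eq_iff sums_iff)
  moreover have "(\<lambda>w. \<Sum>j. P j w) \<in> borel_measurable borel" by measurable
  ultimately show ?thesis by simp
qed

end


lemma ck_sums:
  fixes z w :: complex
  assumes "norm w < norm z"
  shows "(\<lambda>k. (1 / z^(Suc k)) * w^k) sums (1 / (z - w))"
proof -
  have z0: "z \<noteq> 0" using assms by auto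
  have "norm (w / z) < 1" using assms z0 by (simp add: norm_divide divide_simps)
  from sums_mult[OF geometric_sums[OF this], of "1/z"]
  have "(\<lambda>k. 1 / z * (w / z)^k) sums (1 / z * (1 / (1 - w / z)))" .
  moreover have "1 / z * (w / z)^k = (1 / z^(Suc k)) * w^k" for k
    by (simp add: power_divide)
  moreover have "1 / z * (1 / (1 - w / z)) = 1 / (z - w)"
    using z0 assms by (simp add: divide_simps)
  ultimately show ?thesis by simp
qed

lemma bk_sums:
  fixes z w :: complex
  assumes "norm w < norm z"
  shows "(\<lambda>k. (of_nat (Suc k) / z^(k+2)) * w^k) sums (1 / (z - w)^2)"
proof -
  have z0: "z \<noteq> 0" using assms by auto
  have "norm (w / z) < 1" using assms z0 by (simp add: norm_divide divide_simps)
  from sums_mult[OF geometric_deriv_sums[OF this], of "1/z^2"]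
  have "(\<lambda>k. 1 / z^2 * (of_nat (Suc k) * (w / z)^k)) sums (1 / z^2 * (1 / (1 - w / z)^2))" .
  moreover have "1 / z^2 * (of_nat (Suc k) * (w / z)^k) = (of_nat (Suc k) / z^(k+2)) * w^k" for k
    by (simp add: power_divide power_add power2_eq_square)
  moreover have "1 / z^2 * (1 / (1 - w / z)^2) = 1 / (z - w)^2"
  proof -
    have "z - w \<noteq> 0" using assms by auto
    have "(1 - w / z) = (z - w) / z" using z0 by (simp add: divide_simps)
    then show ?thesis using z0 by (simp add: power_divide)
  qed
  ultimately show ?thesis by simp
qed

lemma ck_summable:
  fixes z :: complex
  assumes "0 \<le> b" "b < norm z"
  shows "summable (\<lambda>k. norm (1 / z^(Suc k)) * b^k)"
proof -
  have z: "0 < norm z" using assms by linarith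
  have "summable (\<lambda>k. 1 / norm z * (b / norm z)^k)"
    using assms z by (intro summable_mult summable_geometric) (simp add: divide_simps)
  moreover have "norm (1 / z^(Suc k)) * b^k = 1 / norm z * (b / norm z)^k" for k
    by (simp add: norm_divide norm_power power_divide norm_mult)
  ultimately show ?thesis by simp
qed

lemma bk_summable:
  fixes z :: complex
  assumes "0 \<le> b" "b < norm z"
  shows "summable (\<lambda>k. norm (of_nat (Suc k) / z^(k+2)) * b^k)"
proof -
  have z: "0 < norm z" using assms by linarith
  have "norm (b / norm z) < 1" using assms z by (simp add: divide_simps)
  from geometric_deriv_sums[OF this]
  have "summable (\<lambda>k. of_nat (Suc k) * (b / norm z)^k)" by (simp add: sums_iff)
  then have "summable (\<lambda>k. 1 / norm z ^ 2 * (of_nat (Suc k) * (b / norm z)^k))"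
    by (rule summable_mult)
  moreover have "norm (of_nat (Suc k) / z^(k+2)) * b^k = 1 / norm z ^ 2 * (of_nat (Suc k) * (b / norm z)^k)" for k
  proof -
    have "norm (of_nat (Suc k) / z^(k+2)) = real (Suc k) / norm z^(k+2)"
      by (simp only: norm_divide norm_of_nat norm_power)
    then show ?thesis by (simp add: power_divide power_add power2_eq_square)
  qed
  ultimately show ?thesis by simp
qed

context
  fixes d :: nat and \<rho>0 :: real
  assumes d3: "3 \<le> d" and r0: "0 < \<rho>0" and r1: "\<rho>0 < 1"
begin

lemma P_single: "\<exists>j0. \<forall>k. k \<noteq> j0 \<longrightarrow> P d \<rho>0 k w = 0"
proof (cases "\<exists>j. rseq d \<rho>0 j < cmod w \<and> cmod w < rseq d \<rho>0 (Suc j)")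
  case True
  then obtain j where j: "rseq d \<rho>0 j < cmod w" "cmod w < rseq d \<rho>0 (Suc j)" by blast
  have "P d \<rho>0 k w = 0" if "k \<noteq> j" for k
  proof -
    have "w \<notin> annulus (rseq d \<rho>0 k) (rseq d \<rho>0 (Suc k))"
      using rseq_unique[OF d3 r0 r1, of k "cmod w" j] j that by (auto simp: annulus_def)
    then show ?thesis by (rule P_zero[OF d3 r0 r1])
  qed
  then show ?thesis by blast
next
  case False
  have "P d \<rho>0 k w = 0" for k
  proof -
    have "w \<notin> annulus (rseq d \<rho>0 k) (rseq d \<rho>0 (Suc k))" using False by (auto simp: annulus_def)
    then show ?thesis by (rule P_zero[OF d3 r0 r1])
  qed
  then show ?thesis by blast
qed

lemma area_ann:
  assumes "0 \<le> a" "a \<le> b"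
  shows "(\<integral>w. indicator (annulus a b) w \<partial>lborel) = pi * (b^2 - a^2)"
proof -
  have "has_bochner_integral lborel (\<lambda>w::complex. indicator (annulus a b) w * norm w ^ 0)
           (2 * pi * b^(0+2) / (0+2) - 2 * pi * a^(0+2) / (0+2))"
    using radial_ann[OF assms, of 0] by simp
  then show ?thesis by (simp add: has_bochner_integral_iff algebra_simps power2_eq_square)
qed

lemma telescope_summable_r: "summable (\<lambda>j. pi * (rseq d \<rho>0 (Suc j)^2 - rseq d \<rho>0 j^2))"
proof (rule summableI_nonneg_bounded[where x = pi])
  fix j
  have "rseq d \<rho>0 j ^ 2 \<le> rseq d \<rho>0 (Suc j) ^ 2"
    using rseq_strict[OF d3 r0 r1, of j] rseq_pos[OF d3 r0 r1, of j] by (intro power_mono) auto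
  then show "0 \<le> pi * (rseq d \<rho>0 (Suc j)^2 - rseq d \<rho>0 j^2)" by simp
next
  fix n
  have "(\<Sum>j<n. pi * (rseq d \<rho>0 (Suc j)^2 - rseq d \<rho>0 j^2)) = pi * (rseq d \<rho>0 n ^2 - rseq d \<rho>0 0 ^2)"
    by (simp add: sum_distrib_left[symmetric] sum_lessThan_telescope[of "\<lambda>i. rseq d \<rho>0 i ^ 2"])
  also have "\<dots> \<le> pi * 1"
  proof -
    have "rseq d \<rho>0 n ^2 \<le> 1"
      using rseq_lt1[OF d3 r0 r1, of n] rseq_pos[OF d3 r0 r1, of n] by (simp add: power_le_one)
    moreover have "0 \<le> rseq d \<rho>0 0 ^2" by simp
    ultimately show ?thesis by (intro mult_left_mono) (linarith, simp)
  qed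
  finally show "(\<Sum>j<n. pi * (rseq d \<rho>0 (Suc j)^2 - rseq d \<rho>0 j^2)) \<le> pi" by simp
qed

lemma mu_kernel_sums:
  fixes K :: "complex \<Rightarrow> complex"
  assumes [measurable]: "K \<in> borel_measurable borel"
    and Kb: "\<And>w. norm w < 1 \<Longrightarrow> norm (K w) \<le> B"
  shows "(\<lambda>j. \<integral>w. P d \<rho>0 j w * K w \<partial>lborel) sums (\<integral>w. mu d \<rho>0 w * K w \<partial>lborel)"
proof -
  define f where "f = (\<lambda>j w. P d \<rho>0 j w * K w)"
  let ?A = "\<lambda>j. annulus (rseq d \<rho>0 j) (rseq d \<rho>0 (Suc j))"
  have B0: "0 \<le> B" using Kb[of 0] by (metis norm_ge_zero norm_zero order_trans zero_less_one)
  have fb: "norm (f j w) \<le> B * indicator (?A j) w" for j w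
  proof (cases "w \<in> ?A j")
    case True
    then have "norm w < 1" using rseq_lt1[OF d3 r0 r1, of "Suc j"] by (auto simp: annulus_def)
    then have "norm (K w) \<le> B" by (rule Kb)
    moreover have "norm (P d \<rho>0 j w) \<le> 1" using P_bound[OF d3 r0 r1, of j w] True by simp
    ultimately show ?thesis using True unfolding f_def norm_mult
      by (simp add: mult_le_one) (metis mult_left_le norm_ge_zero order_trans mult.commute mult_right_mono)
  next
    case False
    then show ?thesis using P_bound[OF d3 r0 r1, of j w] by (simp add: f_def)
  qed
  have fint: "integrable lborel (f j)" for j
  proof (rule integrableI_bounded_set[where A="?A j" and B=B])
    show "emeasure lborel (?A j) < \<infinity>" by (rule annulus_finite)
    show "AE x in lborel. x \<in> ?A j \<longrightarrow> norm (f j x) \<le> B"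
    proof (rule AE_I2, rule impI)
      fix x assume "x \<in> ?A j"
      then show "norm (f j x) \<le> B" using fb[of j x] by simp
    qed
    show "AE x in lborel. x \<notin> ?A j \<longrightarrow> f j x = 0"
    proof (rule AE_I2, rule impI)
      fix x assume "x \<notin> ?A j"
      then show "f j x = 0" using fb[of j x] by simp
    qed
    have Pm[measurable]: "P d \<rho>0 i \<in> borel_measurable borel" for i by (rule P_meas[OF d3 r0 r1])
    show "f j \<in> borel_measurable lborel" unfolding f_def
      by (simp only: measurable_lborel2) measurable
  qed auto
  have sn: "summable (\<lambda>j. norm (f j w))" for w
  proof -
    obtain j0 where "\<forall>k. k \<noteq> j0 \<longrightarrow> P d \<rho>0 k w = 0" using P_single by blast
    then have "(\<lambda>j. norm (f j w)) sums norm (f j0 w)"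
      by (intro sums_single_idx) (auto simp: f_def)
    then show ?thesis by (simp add: sums_iff)
  qed
  have intn: "(\<integral>w. norm (f j w) \<partial>lborel) \<le> B * (pi * (rseq d \<rho>0 (Suc j)^2 - rseq d \<rho>0 j^2))" for j
  proof -
    have "(\<integral>w. norm (f j w) \<partial>lborel) \<le> (\<integral>w. B * indicator (?A j) w \<partial>lborel)"
    proof (rule integral_mono)
      show "integrable lborel (\<lambda>w. norm (f j w))" using fint by simp
      show "integrable lborel (\<lambda>w. B * indicator (?A j) w :: real)"
        using annulus_finite by (intro integrable_mult_right integrable_real_indicator) auto
    qed (use fb in auto)
    also have "\<dots> = B * (pi * (rseq d \<rho>0 (Suc j)^2 - rseq d \<rho>0 j^2))"
      using area_ann[of "rseq d \<rho>0 j" "rseq d \<rho>0 (Suc j)"] rseq_pos[OF d3 r0 r1, of j]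
        rseq_strict[OF d3 r0 r1, of j] by simp
    finally show ?thesis .
  qed
  have ss: "summable (\<lambda>j. (\<integral>w. norm (f j w) \<partial>lborel))"
  proof (rule summable_comparison_test'[where N=0])
    show "summable (\<lambda>j. B * (pi * (rseq d \<rho>0 (Suc j)^2 - rseq d \<rho>0 j^2)))"
      by (rule summable_mult[OF telescope_summable_r])
    show "norm (\<integral>w. norm (f j w) \<partial>lborel) \<le> B * (pi * (rseq d \<rho>0 (Suc j)^2 - rseq d \<rho>0 j^2))" for j
      using intn[of j] by simp
  qed
  have S1: "(\<lambda>j. integral\<^sup>L lborel (f j)) sums (\<integral>w. (\<Sum>j. f j w) \<partial>lborel)"
    by (rule sums_integral[OF fint]) (use sn ss in auto)
  have "(\<lambda>w. \<Sum>j. f j w) = (\<lambda>w. mu d \<rho>0 w * K w)"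
  proof
    fix w
    have "(\<lambda>j. f j w) sums (mu d \<rho>0 w * K w)"
      unfolding f_def by (rule sums_mult2[OF P_sums[OF d3 r0 r1]])
    then show "(\<Sum>j. f j w) = mu d \<rho>0 w * K w" by (simp add: sums_iff)
  qed
  then show ?thesis using S1 by (simp add: f_def)
qed

end


context
  fixes d :: nat and \<rho>0 :: real
  assumes d3: "3 \<le> d" and r0: "0 < \<rho>0" and r1: "\<rho>0 < 1"
begin

abbreviation "rr \<equiv> rseq d \<rho>0"
abbreviation "NN \<equiv> nseq d"

lemma P_eq: "P d \<rho>0 j w = indicator (annulus (rr j) (rr (Suc j))) w * (cnj w / of_real (cmod w))^(NN j - 2)"
proof -
  have "P d \<rho>0 j w = gk (rr j) (rr (Suc j)) (NN j - 2) 0 w"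
    by (rule P_gk[OF d3 r0 r1])
  then show ?thesis by (simp add: gk_def)
qed

lemma piece_value:
  "2 * pi * rr (Suc j)^((NN j - 2)+2) / real ((NN j - 2)+2) - 2 * pi * rr j^((NN j - 2)+2) / real ((NN j - 2)+2)
    = 2 * pi * (\<rho>0 powr (1 / real d) - \<rho>0) / real (NN j)"
proof -
  have e: "(NN j - 2) + 2 = NN j" using nseq_ge2[OF d3, of j] by simp
  show ?thesis unfolding e rseq_pow[OF d3 r0 r1] rseq_Suc_pow[OF d3 r0 r1]
    by (simp add: diff_divide_distrib algebra_simps)
qed

lemma P_cauchy:
  assumes z: "1 < norm z"
  shows "(\<integral>w. P d \<rho>0 j w * (1 / (z - w)) \<partial>lborel)
          = (1 / z^(Suc (NN j - 2))) * of_real (2 * pi * (\<rho>0 powr (1 / real d) - \<rho>0) / real (NN j))"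
proof -
  have ab: "0 \<le> rr j" "rr j \<le> rr (Suc j)"
    using rseq_pos[OF d3 r0 r1, of j] rseq_strict[OF d3 r0 r1, of j] by auto
  have b1: "rr (Suc j) < norm z" using rseq_lt1[OF d3 r0 r1, of "Suc j"] z by linarith
  have "has_bochner_integral lborel
          (\<lambda>w. indicator (annulus (rr j) (rr (Suc j))) w * (cnj w / of_real (cmod w))^(NN j - 2) * (1 / (z - w)))
          ((1 / z^(Suc (NN j - 2))) * of_real (2 * pi * rr (Suc j)^((NN j - 2)+2) / real ((NN j - 2)+2) - 2 * pi * rr j^((NN j - 2)+2) / real ((NN j - 2)+2)))"
  proof (rule piece_series[OF ab])
    show "(\<lambda>k. 1 / z ^ Suc k * w ^ k) sums (1 / (z - w))" if "norm w < rr (Suc j)" for w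
      using that b1 by (intro ck_sums) linarith
    show "summable (\<lambda>k. norm (1 / z ^ Suc k) * rr (Suc j) ^ k)"
      using ab b1 by (intro ck_summable) auto
  qed
  then show ?thesis unfolding piece_value by (simp add: P_eq has_bochner_integral_iff)
qed

lemma P_beurling:
  assumes z: "1 < norm z"
  shows "(\<integral>w. P d \<rho>0 j w * (1 / (z - w)^2) \<partial>lborel)
          = (of_nat (Suc (NN j - 2)) / z^((NN j - 2) + 2)) * of_real (2 * pi * (\<rho>0 powr (1 / real d) - \<rho>0) / real (NN j))"
proof -
  have ab: "0 \<le> rr j" "rr j \<le> rr (Suc j)"
    using rseq_pos[OF d3 r0 r1, of j] rseq_strict[OF d3 r0 r1, of j] by auto
  have b1: "rr (Suc j) < norm z" using rseq_lt1[OF d3 r0 r1, of "Suc j"] z by linarith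
  have "has_bochner_integral lborel
          (\<lambda>w. indicator (annulus (rr j) (rr (Suc j))) w * (cnj w / of_real (cmod w))^(NN j - 2) * (1 / (z - w)^2))
          ((of_nat (Suc (NN j - 2)) / z^((NN j - 2) + 2)) * of_real (2 * pi * rr (Suc j)^((NN j - 2)+2) / real ((NN j - 2)+2) - 2 * pi * rr j^((NN j - 2)+2) / real ((NN j - 2)+2)))"
  proof (rule piece_series[OF ab])
    show "(\<lambda>k. of_nat (Suc k) / z ^ (k + 2) * w ^ k) sums (1 / (z - w)^2)" if "norm w < rr (Suc j)" for w
      using that b1 by (intro bk_sums) linarith
    show "summable (\<lambda>k. norm (of_nat (Suc k) / z ^ (k + 2)) * rr (Suc j) ^ k)"
      using ab b1 by (intro bk_summable) auto
  qed
  then show ?thesis unfolding piece_value by (simp add: P_eq has_bochner_integral_iff)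
qed

lemma kernel_bound:
  fixes z w :: complex
  assumes "1 < norm z" "norm w < 1"
  shows "norm (1 / (z - w)) \<le> 1 / (norm z - 1)"
proof -
  have "norm z - 1 \<le> norm z - norm w" using assms by simp
  also have "\<dots> \<le> norm (z - w)" by (rule norm_triangle_ineq2)
  finally have "norm z - 1 \<le> norm (z - w)" .
  then show ?thesis using assms by (simp add: norm_divide divide_simps)
qed

lemma kernel_bound2:
  fixes z w :: complex
  assumes "1 < norm z" "norm w < 1"
  shows "norm (1 / (z - w)^2) \<le> (1 / (norm z - 1))^2"
proof -
  have "norm (1 / (z - w)^2) = norm (1 / (z - w))^2" by (simp add: norm_divide norm_power power_one_over)
  also have "\<dots> \<le> (1 / (norm z - 1))^2"
    using kernel_bound[OF assms] by (intro power_mono) auto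
  finally show ?thesis .
qed

lemma cauchy_sums:
  assumes z: "1 < norm z"
  shows "(\<lambda>j. (1 / z^(Suc (NN j - 2))) * of_real (2 * pi * (\<rho>0 powr (1 / real d) - \<rho>0) / real (NN j)))
           sums (\<integral>w. mu d \<rho>0 w / (z - w) \<partial>lborel)"
proof -
  have "(\<lambda>j. \<integral>w. P d \<rho>0 j w * (1 / (z - w)) \<partial>lborel) sums (\<integral>w. mu d \<rho>0 w * (1 / (z - w)) \<partial>lborel)"
    by (rule mu_kernel_sums[OF d3 r0 r1, where B="1 / (norm z - 1)"]) (use kernel_bound[OF z] in auto)
  then show ?thesis using P_cauchy[OF z] by simp
qed

lemma beurling_sums:
  assumes z: "1 < norm z"
  shows "(\<lambda>j. (of_nat (Suc (NN j - 2)) / z^((NN j - 2) + 2)) * of_real (2 * pi * (\<rho>0 powr (1 / real d) - \<rho>0) / real (NN j)))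
           sums (\<integral>w. mu d \<rho>0 w / (z - w)^2 \<partial>lborel)"
proof -
  have "(\<lambda>j. \<integral>w. P d \<rho>0 j w * (1 / (z - w)^2) \<partial>lborel) sums (\<integral>w. mu d \<rho>0 w * (1 / (z - w)^2) \<partial>lborel)"
    by (rule mu_kernel_sums[OF d3 r0 r1, where B="(1 / (norm z - 1))^2"]) (use kernel_bound2[OF z] in auto)
  then show ?thesis using P_beurling[OF z] by simp
qed

end


lemma vterm_bound:
  fixes z :: complex
  assumes "1 < norm z" "1 \<le> d"
  shows "norm (inverse (z ^ N) / of_nat (d ^ n)) \<le> (1 / real d) ^ n"
proof -
  have "norm (inverse (z ^ N)) \<le> 1"
    using assms by (simp add: norm_inverse norm_power inverse_le_1_iff one_le_power)
  moreover have "norm (of_nat (d ^ n) :: complex) = real d ^ n" by (simp add: norm_power)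
  ultimately show ?thesis using assms
    by (simp add: norm_divide divide_right_mono power_one_over)
qed

lemma vseries_summable:
  fixes z :: complex
  assumes "1 < norm z" "2 \<le> d"
  shows "summable (\<lambda>n. inverse (z ^ ((d - 1) * d ^ n)) / of_nat (d ^ n))"
proof (rule summable_comparison_test'[where N=0])
  show "summable (\<lambda>n. (1 / real d) ^ n)" using assms by (intro summable_geometric) auto
  show "norm (inverse (z ^ ((d - 1) * d ^ n)) / of_nat (d ^ n)) \<le> (1 / real d) ^ n" for n
    using assms by (intro vterm_bound) auto
qed

lemma vfun_sums:
  fixes z :: complex
  assumes "1 < norm z" "2 \<le> d"
  shows "(\<lambda>n. - (z / of_nat d) * (inverse (z ^ ((d - 1) * d ^ n)) / of_nat (d ^ n))) sums vfun d z"
  unfolding vfun_def by (rule sums_mult[OF summable_sums[OF vseries_summable[OF assms]]])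

lemma vfun_pow:
  fixes z :: complex
  assumes z: "1 < norm z" and d: "2 \<le> d"
  shows "vfun d (z ^ d) = of_nat d * z ^ (d - 1) * vfun d z + z"
proof -
  define T where "T = (\<lambda>n. inverse (z ^ ((d - 1) * d ^ n)) / of_nat (d ^ n) :: complex)"
  define S where "S = (\<Sum>n. T n)"
  have z0: "z \<noteq> 0" using z by auto
  have TS: "T sums S" unfolding S_def T_def using vseries_summable[OF z d] by (simp add: summable_sums)
  have zd: "1 < norm (z ^ d)" using z d by (simp add: norm_power one_less_power)
  have "(\<lambda>n. T (Suc n)) sums (S - T 0)"
    using TS sums_Suc_iff[of T "S - T 0"] by simp
  then have "(\<lambda>n. of_nat d * T (Suc n)) sums (of_nat d * (S - T 0))" by (rule sums_mult)
  moreover have "of_nat d * T (Suc n) = inverse ((z ^ d) ^ ((d - 1) * d ^ n)) / of_nat (d ^ n)" for n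
  proof -
    have "(z ^ d) ^ ((d - 1) * d ^ n) = z ^ ((d - 1) * d ^ Suc n)"
      by (simp add: power_mult[symmetric] mult_ac)
    then show ?thesis using d by (simp add: T_def divide_simps)
  qed
  ultimately have S2: "(\<lambda>n. inverse ((z ^ d) ^ ((d - 1) * d ^ n)) / of_nat (d ^ n)) sums (of_nat d * (S - T 0))"
    by simp
  have "vfun d (z ^ d) = - (z ^ d / of_nat d) * (of_nat d * (S - T 0))"
    unfolding vfun_def using S2 by (simp add: sums_iff)
  also have "\<dots> = - (z ^ d) * S + z ^ d * T 0" using d by (simp add: algebra_simps)
  also have "z ^ d * T 0 = z"
  proof -
    have "z ^ d = z * z ^ (d - 1)" using d by (simp add: power_eq_if)
    then show ?thesis using z0 by (simp add: T_def)
  qed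
  also have "vfun d z = - (z / of_nat d) * S" by (simp add: vfun_def S_def T_def)
  then have "- (z ^ d) * S = of_nat d * z ^ (d - 1) * vfun d z"
  proof -
    have zd: "z ^ d = z * z ^ (d - 1)" using d by (simp add: power_eq_if)
    have h: "of_nat d * vfun d z = -(S*z)" using \<open>vfun d z = - (z / of_nat d) * S\<close> d by (simp add: field_simps)
    have "of_nat d * z ^ (d - 1) * vfun d z = (of_nat d * vfun d z) * z ^ (d - 1)" by (simp only: mult_ac)
    also have "\<dots> = - (z ^ d) * S" unfolding h zd by (simp only: mult_ac mult_minus_left mult_minus_right)
    finally show ?thesis by simp
  qed
  finally show ?thesis by simp
qed

context
  fixes d :: nat and \<rho>0 :: real
  assumes d3: "3 \<le> d" and r0: "0 < \<rho>0" and r1: "\<rho>0 < 1"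
begin

lemma cauchy_formula:
  fixes z :: complex
  assumes z: "1 < norm z"
  defines "c \<equiv> (2 * real d / (real d - 1)) * (\<rho>0 powr (1 / real d) - \<rho>0)"
  shows "cauchy_transform (mu d \<rho>0) z = - of_real c * vfun d z"
proof -
  define \<delta> where "\<delta> = \<rho>0 powr (1 / real d) - \<rho>0"
  have z0: "z \<noteq> 0" using z by auto
  have A: "(\<lambda>j. of_real (1 / pi) * ((1 / z^(Suc (nseq d j - 2))) * of_real (2 * pi * \<delta> / real (nseq d j))))
             sums cauchy_transform (mu d \<rho>0) z"
    unfolding cauchy_transform_def \<delta>_def by (rule sums_mult[OF cauchy_sums[OF d3 r0 r1 z]])
  have B: "(\<lambda>n. - of_real c * (- (z / of_nat d) * (inverse (z ^ ((d - 1) * d ^ n)) / of_nat (d ^ n))))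
             sums (- of_real c * vfun d z)"
    using d3 by (intro sums_mult vfun_sums z) auto
  have eq: "of_real (1 / pi) * ((1 / z^(Suc (nseq d j - 2))) * of_real (2 * pi * \<delta> / real (nseq d j)))
      = - of_real c * (- (z / of_nat d) * (inverse (z ^ ((d - 1) * d ^ j)) / of_nat (d ^ j)))" for j
  proof -
    obtain K where K: "nseq d j = Suc (Suc K)" using nseq_ge2[OF d3, of j]
      by (metis add_2_eq_Suc le_Suc_ex)
    have Nr: "real (nseq d j) = (real d - 1) * real d ^ j" using d3 by (simp add: nseq_def of_nat_diff)
    have d1: "real d - 1 \<noteq> 0" "real d \<noteq> 0" using d3 by auto
    have real_eq: "1 / pi * (2 * pi * \<delta> / real (nseq d j)) = c / (real d * real d ^ j)"
      unfolding c_def \<delta>_def[symmetric] Nr using d1 by (simp add: field_simps)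
    have "(d - 1) * d ^ j = Suc (Suc K)" using K by (simp add: nseq_def)
    then have zz: "z * inverse (z ^ ((d - 1) * d ^ j)) = 1 / z ^ Suc K" using z0
      by (simp add: divide_simps)
    have "- of_real c * (- (z / of_nat d) * (inverse (z ^ ((d - 1) * d ^ j)) / of_nat (d ^ j)))
        = of_real (c / (real d * real d ^ j)) * (z * inverse (z ^ ((d - 1) * d ^ j)))"
      using d1 by (simp add: field_simps)
    also have "\<dots> = of_real (1 / pi * (2 * pi * \<delta> / real (nseq d j))) * (1 / z ^ Suc K)"
      by (simp only: real_eq zz)
    also have "\<dots> = of_real (1 / pi) * ((1 / z^(Suc (nseq d j - 2))) * of_real (2 * pi * \<delta> / real (nseq d j)))"
      by (simp add: K)
    finally show ?thesis by simp
  qed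
  show ?thesis using A B unfolding eq by (rule sums_unique2)
qed

end


lemma deriv_inv_pow:
  fixes x :: complex
  assumes x: "x \<noteq> 0"
  shows "((\<lambda>x. inverse (x^M)) has_field_derivative (- of_nat M * inverse (x^(Suc M)))) (at x within s)"
proof -
  have "((\<lambda>x. x^M) has_field_derivative of_nat M * x^(M - Suc 0)) (at x within s)"
    using DERIV_power[OF DERIV_ident, of M x s] by simp
  from DERIV_inverse_fun[OF this] have
    "((\<lambda>x. inverse (x^M)) has_field_derivative - (of_nat M * x^(M - Suc 0) * inverse ((x^M) ^ Suc (Suc 0)))) (at x within s)"
    using x by simp
  moreover have "- (of_nat M * x^(M - Suc 0) * inverse ((x^M) ^ Suc (Suc 0))) = - of_nat M * inverse (x^(Suc M))"
  proof (cases M)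
    case 0 then show ?thesis by simp
  next
    case (Suc K)
    have "x^(M - Suc 0) * inverse ((x^M) ^ Suc (Suc 0)) = inverse (x^(Suc M))"
      using x unfolding Suc by (simp add: field_simps power_mult_distrib)
    then show ?thesis by simp
  qed
  ultimately show ?thesis by (simp only:)
qed

context
  fixes d :: nat and \<rho>0 :: real
  assumes d3: "3 \<le> d" and r0: "0 < \<rho>0" and r1: "\<rho>0 < 1"
begin

definition NF :: "nat \<Rightarrow> nat" where "NF n = (d - 1) * d ^ n"

definition Fv :: "nat \<Rightarrow> complex \<Rightarrow> complex" where
  "Fv n x = - (x / of_nat d) * (inverse (x ^ NF n) / of_nat (d ^ n))"

definition Fv' :: "nat \<Rightarrow> complex \<Rightarrow> complex" where
  "Fv' n x = of_nat (NF n - 1) / (of_nat d * of_nat (d ^ n)) * inverse (x ^ NF n)"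

lemma Fv'_eq: "Fv' n x = of_nat (nseq d n - 1) / (of_nat d * of_nat (d ^ n)) * inverse (x ^ nseq d n)"
  by (simp add: Fv'_def NF_def nseq_def)

lemma NF_nseq: "NF n = nseq d n" by (simp add: NF_def nseq_def)

lemma NF_ge2: "2 \<le> NF n"
  using nseq_ge2[OF d3, of n] by (simp add: NF_def nseq_def)

lemma NF_ge_n: "n \<le> NF n"
proof -
  have "n < 2 ^ n" by (rule less_exp)
  also have "\<dots> \<le> d ^ n" using d3 by (intro power_mono) auto
  also have "\<dots> \<le> (d - 1) * d ^ n" using d3 by simp
  finally show ?thesis by (simp add: NF_def)
qed

lemma Fv_alt: "Fv n x = - (1 / (of_nat d * of_nat (d ^ n))) * inverse (x ^ (NF n - 1))"
proof (cases "x = 0")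
  case True
  then show ?thesis using NF_ge2[of n] by (simp add: Fv_def)
next
  case False
  have "x ^ NF n = x * x ^ (NF n - 1)" using NF_ge2[of n] by (simp add: power_eq_if)
  then show ?thesis using False d3 by (simp add: Fv_def field_simps)
qed

lemma Fv_deriv:
  assumes "x \<noteq> 0"
  shows "(Fv n has_field_derivative Fv' n x) (at x within s)"
proof -
  have "((\<lambda>x. - (1 / (of_nat d * of_nat (d ^ n))) * inverse (x ^ (NF n - 1))) has_field_derivative
          - (1 / (of_nat d * of_nat (d ^ n))) * (- of_nat (NF n - 1) * inverse (x^(Suc (NF n - 1))))) (at x within s)"
    by (intro DERIV_cmult deriv_inv_pow assms)
  moreover have "Suc (NF n - 1) = NF n" using NF_ge2[of n] by simp
  moreover have "- (1 / (of_nat d * of_nat (d ^ n))) * (- of_nat (NF n - 1) * inverse (x^(Suc (NF n - 1)))) = Fv' n x"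
    using calculation(2) NF_ge2[of n] apply (simp add: Fv'_def of_nat_diff minus_divide_left[symmetric])
    by (metis minus_diff_eq minus_divide_left mult_minus_left)
  moreover have "Fv n = (\<lambda>x. - (1 / (of_nat d * of_nat (d ^ n))) * inverse (x ^ (NF n - 1)))"
    by (rule ext, rule Fv_alt)
  ultimately show ?thesis by (simp only:)
qed

lemma Fv'_bound:
  assumes "q \<le> norm x" "1 < q"
  shows "norm (Fv' n x) \<le> (1 / q) ^ n"
proof -
  have q0: "0 < q" using assms by simp
  have c: "real (NF n - 1) / (real d * real d ^ n) \<le> 1"
  proof -
    have "real (NF n - 1) \<le> real (NF n)" by simp
    also have "\<dots> = (real d - 1) * real d ^ n" using d3 by (simp add: NF_def of_nat_diff)
    also have "\<dots> \<le> real d * real d ^ n" by (simp add: mult_right_mono)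
    finally show ?thesis using d3 by (simp add: divide_simps)
  qed
  have "norm (inverse (x ^ NF n)) = (1 / norm x) ^ NF n" by (simp add: norm_inverse norm_power power_one_over inverse_eq_divide norm_divide)
  also have "\<dots> \<le> (1 / q) ^ NF n" using assms q0 by (intro power_mono) (auto simp: divide_simps)
  also have "\<dots> \<le> (1 / q) ^ n" using assms q0 NF_ge_n[of n] by (intro power_decreasing) auto
  finally have i: "norm (inverse (x ^ NF n)) \<le> (1 / q) ^ n" .
  have "norm (Fv' n x) = real (NF n - 1) / (real d * real d ^ n) * norm (inverse (x ^ NF n))"
    unfolding Fv'_def norm_mult norm_divide by (simp add: norm_power)
  also have "\<dots> \<le> 1 * (1 / q) ^ n"
    using c i by (intro mult_mono) auto
  finally show ?thesis by simp
qed

lemma vfun_has_deriv: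
  assumes z: "1 < norm z"
  shows "(vfun d has_field_derivative (\<Sum>n. Fv' n z)) (at z)"
proof -
  define e where "e = (norm z - 1) / 2"
  define q where "q = 1 + e"
  have e0: "0 < e" using z by (simp add: e_def)
  let ?S = "ball z e"
  have inS: "x \<in> ?S \<Longrightarrow> q \<le> norm x" for x
  proof -
    assume "x \<in> ?S"
    then have "norm (z - x) < e" by (simp add: dist_norm)
    moreover have "norm z - norm (z - x) \<le> norm x" using norm_triangle_ineq2[of z "z - x"] by simp
    ultimately show "q \<le> norm x" unfolding q_def e_def by argo
  qed
  have q1: "1 < q" using e0 by (simp add: q_def)
  have unif: "uniformly_convergent_on ?S (\<lambda>n x. \<Sum>i<n. Fv' i x)"
  proof -
    have "uniform_limit ?S (\<lambda>n x. \<Sum>i<n. Fv' i x) (\<lambda>x. \<Sum>i. Fv' i x) sequentially"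
    proof (rule Weierstrass_m_test_ev)
      show "\<forall>\<^sub>F n in sequentially. \<forall>x\<in>?S. norm (Fv' n x) \<le> (1 / q) ^ n"
        using Fv'_bound inS q1 by (intro always_eventually) auto
      show "summable (\<lambda>n. (1 / q) ^ n :: real)" using q1 by (intro summable_geometric) auto
    qed
    then show ?thesis unfolding uniformly_convergent_on_def by blast
  qed
  have sumz: "summable (\<lambda>n. Fv n z)"
    using vfun_sums[OF z, of d] d3 by (simp add: Fv_def NF_def sums_iff)
  have der: "x \<in> ?S \<Longrightarrow> (Fv n has_field_derivative Fv' n x) (at x within ?S)" for n x
  proof -
    assume "x \<in> ?S"
    then have "x \<noteq> 0" using inS q1 by fastforce
    then show ?thesis by (rule Fv_deriv)
  qed
  have D: "((\<lambda>x. \<Sum>n. Fv n x) has_field_derivative (\<Sum>n. Fv' n z)) (at z)"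
    using has_field_derivative_series'(2)[OF convex_ball der unif _ sumz] e0 by simp
  have ev: "eventually (\<lambda>x. (\<Sum>n. Fv n x) = vfun d x) (nhds z)"
  proof -
    have "open {x::complex. 1 < norm x}" by (intro open_Collect_less continuous_intros)
    then have "eventually (\<lambda>x. x \<in> {x::complex. 1 < norm x}) (nhds z)"
      using z by (intro eventually_nhds_in_open) auto
    then show ?thesis
    proof (rule eventually_mono)
      fix x assume "x \<in> {x::complex. 1 < norm x}"
      then have "1 < norm x" by simp
      from vfun_sums[OF this, of d] d3 show "(\<Sum>n. Fv n x) = vfun d x"
        by (simp add: Fv_def NF_def sums_iff)
    qed
  qed
  show ?thesis using D DERIV_cong_ev[OF refl ev refl] by simp
qed

lemma deriv_vfun_sums:
  assumes z: "1 < norm z"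
  shows "(\<lambda>n. Fv' n z) sums deriv (vfun d) z"
proof -
  define e where "e = (norm z - 1) / 2"
  have e0: "0 < e" using z by (simp add: e_def)
  have q1: "1 < 1 + e" using e0 by simp
  have "summable (\<lambda>n. Fv' n z)"
  proof (rule summable_comparison_test'[where N=0])
    show "summable (\<lambda>n. (1 / (1 + e)) ^ n)" using q1 by (intro summable_geometric) auto
    show "norm (Fv' n z) \<le> (1 / (1 + e)) ^ n" for n
      using z by (intro Fv'_bound) (auto simp: e_def field_simps)
  qed
  moreover have "deriv (vfun d) z = (\<Sum>n. Fv' n z)"
    by (rule DERIV_imp_deriv[OF vfun_has_deriv[OF z]])
  ultimately show ?thesis by (simp add: summable_sums)
qed

end


lemma pull_ratio:
  fixes z :: complex
  assumes z: "z \<noteq> 0" and d: "1 \<le> d"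
  shows "cnj (of_nat d * z ^ (d - 1)) / (of_nat d * z ^ (d - 1)) = (cnj z / of_real (cmod z)) ^ (2 * (d - 1))"
proof -
  have d0: "(of_nat d :: complex) \<noteq> 0" using d by simp
  have "cnj (of_nat d * z ^ (d - 1)) / (of_nat d * z ^ (d - 1)) = cnj z ^ (d - 1) / z ^ (d - 1)"
    using d0 by simp
  also have "\<dots> = (cnj z / z) ^ (d - 1)" by (simp add: power_divide)
  also have "cnj z / z = (cnj z / of_real (cmod z)) ^ 2"
  proof -
    have "(cnj z / of_real (cmod z)) ^ 2 = cnj z ^ 2 / of_real ((cmod z)^2)"
      by (simp add: power_divide)
    also have "\<dots> = cnj z ^ 2 / (z * cnj z)" by (simp only: complex_norm_square)
    also have "\<dots> = cnj z / z" using z by (simp add: power2_eq_square field_simps)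
    finally show ?thesis by simp
  qed
  also have "((cnj z / of_real (cmod z)) ^ 2) ^ (d - 1) = (cnj z / of_real (cmod z)) ^ (2 * (d - 1))"
    by (simp add: power_mult)
  finally show ?thesis .
qed

lemma exp_arith:
  fixes N d :: nat
  assumes "2 \<le> N" "1 \<le> d"
  shows "d * (N - 2) + 2 * (d - 1) = d * N - 2"
proof -
  obtain K where K: "N = K + 2" by (rule that[of "N - 2"]) (use assms in simp)
  obtain e where e: "d = e + 1" by (rule that[of "d - 1"]) (use assms in simp)
  show ?thesis unfolding K e by (simp add: algebra_simps)
qed

context
  fixes d :: nat and \<rho>0 :: real
  assumes d3: "3 \<le> d" and r0: "0 < \<rho>0" and r1: "\<rho>0 < 1"
begin

lemma mu_small: "cmod w \<le> rseq d \<rho>0 0 \<Longrightarrow> mu d \<rho>0 w = 0"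
proof (rule mu_out[OF d3 r0 r1])
  assume w: "cmod w \<le> rseq d \<rho>0 0"
  show "\<not> (\<exists>j. rseq d \<rho>0 j < cmod w \<and> cmod w < rseq d \<rho>0 (Suc j))"
  proof
    assume "\<exists>j. rseq d \<rho>0 j < cmod w \<and> cmod w < rseq d \<rho>0 (Suc j)"
    then obtain j where "rseq d \<rho>0 j < cmod w" by blast
    moreover have "rseq d \<rho>0 0 \<le> rseq d \<rho>0 j" by (rule rseq_mono[OF d3 r0 r1]) simp
    ultimately show False using w by linarith
  qed
qed

lemma part_i: "mu d \<rho>0 z = pullback_pow d (mu d \<rho>0) z
                + mu d \<rho>0 z * indicator (annulus (rseq d \<rho>0 0) (rseq d \<rho>0 1)) z"
proof (cases "\<exists>j. rseq d \<rho>0 j < cmod z \<and> cmod z < rseq d \<rho>0 (Suc j)")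
  case True
  then obtain j where j: "rseq d \<rho>0 j < cmod z" "cmod z < rseq d \<rho>0 (Suc j)" by blast
  have z0: "0 < cmod z" using j rseq_pos[OF d3 r0 r1, of j] by linarith
  have dpos: "0 < d" using d3 by simp
  show ?thesis
  proof (cases j)
    case 0
    have "cmod (z ^ d) < rseq d \<rho>0 1 ^ d"
      using j 0 z0 dpos by (simp add: norm_power power_strict_mono)
    also have "rseq d \<rho>0 1 ^ d = rseq d \<rho>0 0" using rseq_Suc_pow_d[OF d3 r0 r1, of 0] by simp
    finally have "mu d \<rho>0 (z ^ d) = 0" by (intro mu_small) simp
    then have "pullback_pow d (mu d \<rho>0) z = 0" by (simp add: pullback_pow_def)
    moreover have "z \<in> annulus (rseq d \<rho>0 0) (rseq d \<rho>0 1)" using j 0 by (simp add: annulus_def)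
    ultimately show ?thesis by simp
  next
    case (Suc i)
    define u where "u = cnj z / of_real (cmod z)"
    have zn0: "z \<noteq> 0" using z0 by auto
    have notin: "z \<notin> annulus (rseq d \<rho>0 0) (rseq d \<rho>0 1)"
    proof -
      have "rseq d \<rho>0 1 \<le> rseq d \<rho>0 j" using Suc by (intro rseq_mono[OF d3 r0 r1]) simp
      then show ?thesis using j by (simp add: annulus_def)
    qed
    have muz: "mu d \<rho>0 z = u ^ (nseq d j - 2)" using mu_in[OF d3 r0 r1 j] by (simp add: u_def)
    have lo: "rseq d \<rho>0 i < cmod (z ^ d)"
    proof -
      have "rseq d \<rho>0 (Suc i) ^ d < cmod z ^ d"
        using j Suc rseq_pos[OF d3 r0 r1, of "Suc i"] dpos by (intro power_strict_mono) auto
      then show ?thesis using rseq_Suc_pow_d[OF d3 r0 r1, of i] by (simp add: norm_power)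
    qed
    have hi: "cmod (z ^ d) < rseq d \<rho>0 (Suc i)"
    proof -
      have "cmod z ^ d < rseq d \<rho>0 (Suc (Suc i)) ^ d"
        using j Suc z0 dpos by (intro power_strict_mono) auto
      then show ?thesis using rseq_Suc_pow_d[OF d3 r0 r1, of "Suc i"] by (simp add: norm_power)
    qed
    have "cnj (z ^ d) / of_real (cmod (z ^ d)) = u ^ d"
      by (simp add: u_def norm_power power_divide)
    then have muzd: "mu d \<rho>0 (z ^ d) = (u ^ d) ^ (nseq d i - 2)"
      using mu_in[OF d3 r0 r1 lo hi] by simp
    have "pullback_pow d (mu d \<rho>0) z = (u ^ d) ^ (nseq d i - 2) * u ^ (2 * (d - 1))"
    proof -
      have pr: "cnj (of_nat d * z^(d-1)) / (of_nat d * z^(d-1)) = u^(2*(d-1))"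
        using pull_ratio[OF zn0, of d] dpos by (simp add: u_def)
      show ?thesis by (simp only: pullback_pow_def muzd times_divide_eq_right[symmetric] pr)
    qed
    also have "\<dots> = u ^ (d * (nseq d i - 2) + 2 * (d - 1))"
      by (simp add: power_mult power_add)
    also have "d * (nseq d i - 2) + 2 * (d - 1) = nseq d j - 2"
      using exp_arith[OF nseq_ge2[OF d3, of i], of d] dpos by (simp add: Suc nseq_Suc)
    finally show ?thesis using muz notin by simp
  qed
next
  case False
  have mz: "mu d \<rho>0 z = 0" by (rule mu_out[OF d3 r0 r1 False])
  have notin: "z \<notin> annulus (rseq d \<rho>0 0) (rseq d \<rho>0 1)"
    using False by (auto simp: annulus_def)
  have "mu d \<rho>0 (z ^ d) = 0"
  proof (rule mu_out[OF d3 r0 r1], rule notI)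
    assume "\<exists>i. rseq d \<rho>0 i < cmod (z ^ d) \<and> cmod (z ^ d) < rseq d \<rho>0 (Suc i)"
    then obtain i where i: "rseq d \<rho>0 i < cmod z ^ d" "cmod z ^ d < rseq d \<rho>0 (Suc i)"
      by (auto simp: norm_power)
    have "rseq d \<rho>0 (Suc i) ^ d < cmod z ^ d" using i rseq_Suc_pow_d[OF d3 r0 r1, of i] by simp
    then have a: "rseq d \<rho>0 (Suc i) < cmod z" by (rule power_less_imp_less_base) simp
    have "cmod z ^ d < rseq d \<rho>0 (Suc (Suc i)) ^ d" using i rseq_Suc_pow_d[OF d3 r0 r1, of "Suc i"] by simp
    then have b: "cmod z < rseq d \<rho>0 (Suc (Suc i))"
      by (rule power_less_imp_less_base) (use rseq_pos[OF d3 r0 r1] less_imp_le in blast)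
    show False using False a b by blast
  qed
  then have "pullback_pow d (mu d \<rho>0) z = 0" by (simp add: pullback_pow_def)
  then show ?thesis using mz notin by simp
qed

lemma beurling_int:
  assumes z: "1 < norm z"
  shows "beurling_transform (mu d \<rho>0) z = of_real (- 1 / pi) * (\<integral>w. mu d \<rho>0 w / (z - w)^2 \<partial>lborel)"
proof -
  define J where "J = (\<integral>w. mu d \<rho>0 w / (z - w)^2 \<partial>lborel)"
  have eqI: "(LINT w:{w. e < cmod (z - w)}|lborel. mu d \<rho>0 w / (z - w)^2) = J"
    if e: "0 < e" "e < norm z - 1" for e
  proof -
    have "indicator {w. e < cmod (z - w)} w *\<^sub>R (mu d \<rho>0 w / (z - w)^2) = mu d \<rho>0 w / (z - w)^2" for w
    proof (cases "1 \<le> cmod w")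
      case True then show ?thesis by (simp add: mu_zero_ge1[OF d3 r0 r1])
    next
      case False
      have "norm z - norm w \<le> norm (z - w)" by (rule norm_triangle_ineq2)
      then have "e < cmod (z - w)" using False e by linarith
      then show ?thesis by simp
    qed
    then show ?thesis unfolding set_lebesgue_integral_def J_def by simp
  qed
  have ev: "eventually (\<lambda>e. (LINT w:{w. e < cmod (z - w)}|lborel. mu d \<rho>0 w / (z - w)^2) = J) (at_right 0)"
    using eventually_at_right_real[of 0 "norm z - 1"] z
    by (auto elim!: eventually_mono intro: eqI)
  have "Lim (at_right 0) (\<lambda>e. LINT w:{w. e < cmod (z - w)}|lborel. mu d \<rho>0 w / (z - w)^2) = J"
    by (rule tendsto_Lim) (simp_all add: tendsto_eventually[OF ev])
  then show ?thesis by (simp add: beurling_transform_def J_def)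
qed

lemma beurling_formula:
  fixes z :: complex
  assumes z: "1 < norm z"
  defines "c \<equiv> (2 * real d / (real d - 1)) * (\<rho>0 powr (1 / real d) - \<rho>0)"
  shows "beurling_transform (mu d \<rho>0) z = - of_real c * deriv (vfun d) z"
proof -
  define \<delta> where "\<delta> = \<rho>0 powr (1 / real d) - \<rho>0"
  have z0: "z \<noteq> 0" using z by auto
  have A: "(\<lambda>j. of_real (- 1 / pi) * ((of_nat (Suc (nseq d j - 2)) / z^((nseq d j - 2) + 2)) * of_real (2 * pi * \<delta> / real (nseq d j))))
             sums beurling_transform (mu d \<rho>0) z"
    unfolding beurling_int[OF z] \<delta>_def by (rule sums_mult[OF beurling_sums[OF d3 r0 r1 z]])
  have B: "(\<lambda>n. - of_real c * Fv' d n z) sums (- of_real c * deriv (vfun d) z)"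
    by (intro sums_mult deriv_vfun_sums[OF d3 r0 r1 z])
  have eq: "of_real (- 1 / pi) * ((of_nat (Suc (nseq d j - 2)) / z^((nseq d j - 2) + 2)) * of_real (2 * pi * \<delta> / real (nseq d j)))
      = - of_real c * Fv' d j z" for j
  proof -
    have N2: "2 \<le> nseq d j" by (rule nseq_ge2[OF d3])
    have NF: "NF d j = nseq d j" by (rule NF_nseq[OF d3 r0 r1])
    have Nr: "real (nseq d j) = (real d - 1) * real d ^ j" using d3 by (simp add: nseq_def of_nat_diff)
    have d1: "real d - 1 \<noteq> 0" "real d \<noteq> 0" using d3 by auto
    have real_eq: "- 1 / pi * (2 * pi * \<delta> / real (nseq d j)) = - c / (real d * real d ^ j)"
      unfolding c_def \<delta>_def[symmetric] Nr using d1 by (simp add: field_simps)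
    have e1: "Suc (nseq d j - 2) = nseq d j - 1" "nseq d j - 2 + 2 = nseq d j" using N2 by auto
    have "of_real (- 1 / pi) * ((of_nat (Suc (nseq d j - 2)) / z^((nseq d j - 2) + 2)) * of_real (2 * pi * \<delta> / real (nseq d j)))
        = of_real (- 1 / pi * (2 * pi * \<delta> / real (nseq d j))) * (of_nat (nseq d j - 1) * inverse (z ^ nseq d j))"
      unfolding e1 by (simp add: field_simps)
    also have "\<dots> = of_real (- c / (real d * real d ^ j)) * (of_nat (nseq d j - 1) * inverse (z ^ nseq d j))"
      by (simp only: real_eq)
    also have "\<dots> = - of_real c * Fv' d j z"
      unfolding Fv'_eq[OF d3 r0 r1] using d1 by (simp add: field_simps)
    finally show ?thesis .
  qed
  show ?thesis using A B unfolding eq by (rule sums_unique2)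
qed

lemma cauchy_pow:
  fixes z :: complex
  assumes z: "1 < norm z"
  defines "c \<equiv> (2 * real d / (real d - 1)) * (\<rho>0 powr (1 / real d) - \<rho>0)"
  shows "cauchy_transform (mu d \<rho>0) (z ^ d) = of_nat d * z ^ (d - 1) * cauchy_transform (mu d \<rho>0) z - of_real c * z"
proof -
  have zd: "1 < norm (z ^ d)" using z d3 by (simp add: norm_power one_less_power)
  have "cauchy_transform (mu d \<rho>0) (z ^ d) = - of_real c * vfun d (z ^ d)"
    unfolding c_def by (rule cauchy_formula[OF d3 r0 r1 zd])
  also have "\<dots> = - of_real c * (of_nat d * z ^ (d - 1) * vfun d z + z)"
    using vfun_pow[OF z] d3 by simp
  also have "\<dots> = of_nat d * z ^ (d - 1) * (- of_real c * vfun d z) - of_real c * z"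
    by (simp add: algebra_simps)
  also have "- of_real c * vfun d z = cauchy_transform (mu d \<rho>0) z"
    unfolding c_def by (rule cauchy_formula[OF d3 r0 r1 z, symmetric])
  finally show ?thesis .
qed

end


theorem lemma5p4:
  fixes d :: nat and \<rho>0 :: real
  assumes "d \<ge> 3" and "0 < \<rho>0" and "\<rho>0 < 1"
  defines "c \<equiv> (2 * real d / (real d - 1)) * (\<rho>0 powr (1 / real d) - \<rho>0)"
  shows "(\<forall>z. mu d \<rho>0 z = pullback_pow d (mu d \<rho>0) z
                + mu d \<rho>0 z * indicator (annulus (rseq d \<rho>0 0) (rseq d \<rho>0 1)) z)
    \<and> (\<forall>z. 1 < cmod z \<longrightarrow>
          cauchy_transform (mu d \<rho>0) (z ^ d)
            = of_nat d * z ^ (d - 1) * cauchy_transform (mu d \<rho>0) z - of_real c * z)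
    \<and> (\<forall>z. 1 < cmod z \<longrightarrow> cauchy_transform (mu d \<rho>0) z = - of_real c * vfun d z)
    \<and> (\<forall>z. 1 < cmod z \<longrightarrow> beurling_transform (mu d \<rho>0) z = - of_real c * deriv (vfun d) z)"
  using part_i[OF assms(1-3)] cauchy_pow[OF assms(1-3)] cauchy_formula[OF assms(1-3)]
    beurling_formula[OF assms(1-3)]
  unfolding c_def by blast


end
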